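(* Let $G_1$ be a connected graph on $n_1$ vertices, and let $G_2$ be an $r_2$-regular graph with $r_2\ge1$, on $n_2$ vertices and $m_2$ edges, with adjacency matrix $A_{G_2}$ and Laplacian eigenvalues $\mu_1(G_2),\dots,\mu_{n_2}(G_2)$. Let $C=L_{G_2}+r_2I_{n_2}$. Then \begin{align*} Kf(G_1\star G_2)&=n_1(1+n_2+m_2)\Big[\frac{n_1m_2}{3}+\frac{n_1}{3}\Big(\mathrm{tr}(C^{-1}A_{G_2})+r_2\sum_{i=1}^{n_2}\frac{1}{\mu_i(G_2)+r_2}\Big)+3n_1\sum_{i=1}^{n_2}\frac{1}{\mu_i(G_2)+r_2}\\ &\qquad+\frac{m_2+n_2+1}{n_1}Kf(G_1)\Big]-\frac{n_1m_2r_2+n_1n_2(r_2+3)^2}{3r_2}. \end{align*}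
   Context: All graphs are simple and undirected; $L_G=D_G-A_G$ is the Laplacian matrix. The resistance distance between two vertices of a connected graph is the effective resistance between them when every edge is a unit resistor, and the Kirchhoff index $Kf(G)$ of a connected graph is the sum of resistance distances over all unordered pairs of distinct vertices. The corona-edge of the subdivision graph $G_1\star G_2$ is obtained from $G_1$ and $|V(G_1)|$ vertex-disjoint copies of the subdivision graph $S(G_2)$ (the graph obtained from $G_2$ by inserting a new vertex into every edge; the inserted vertices are the subdivision vertices) by joining the $i$-th vertex of $G_1$ to every subdivision vertex of the $i$-th copy. It has $n_1(1+n_2+m_2)$ vertices. *)

theory Defs
  imports "Jordan_Normal_Form.Gauss_Jordan_Elimination" "Jordan_Normal_Form.Char_Poly"
begin

definition simple_graph :: "'a set \<Rightarrow> 'a set set \<Rightarrow> bool" where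
  "simple_graph V E \<longleftrightarrow> finite V \<and> E \<subseteq> {{u, v} | u v. u \<in> V \<and> v \<in> V \<and> u \<noteq> v}"

definition gdegree :: "'a set \<Rightarrow> 'a set set \<Rightarrow> 'a \<Rightarrow> nat" where
  "gdegree V E v = card {u \<in> V. {u, v} \<in> E}"

definition regular_graph :: "'a set \<Rightarrow> 'a set set \<Rightarrow> nat \<Rightarrow> bool" where
  "regular_graph V E r \<longleftrightarrow> (\<forall>v\<in>V. gdegree V E v = r)"

definition connected_graph :: "'a set \<Rightarrow> 'a set set \<Rightarrow> bool" where
  "connected_graph V E \<longleftrightarrow> V \<noteq> {} \<and>
     (\<forall>u\<in>V. \<forall>v\<in>V. (\<lambda>x y. {x, y} \<in> E)\<^sup>*\<^sup>* u v)"

definition laplacian :: "'a set \<Rightarrow> 'a set set \<Rightarrow> 'a \<Rightarrow> 'a \<Rightarrow> real" where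
  "laplacian V E u v =
     (if u = v then real (gdegree V E u) else if {u, v} \<in> E then -1 else 0)"

text \<open>Effective resistance with unit resistors: inject a unit current at u and
  extract it at v; the resulting potential vector x satisfies L x = e_u - e_v
  (Kirchhoff's current law + Ohm's law), and the resistance is the potential
  difference x u - x v.\<close>
definition resistance :: "'a set \<Rightarrow> 'a set set \<Rightarrow> 'a \<Rightarrow> 'a \<Rightarrow> real" where
  "resistance V E u v = (THE r. \<exists>x :: 'a \<Rightarrow> real.
      (\<forall>w\<in>V. (\<Sum>y\<in>V. laplacian V E w y * x y) =
               (if w = u then 1 else 0) - (if w = v then 1 else 0))
      \<and> r = x u - x v)"

definition kirchhoff :: "'a set \<Rightarrow> 'a set set \<Rightarrow> real" where
  "kirchhoff V E = (\<Sum>p\<in>{(u, v). u \<in> V \<and> v \<in> V \<and> u \<noteq> v}. resistance V E (fst p) (snd p)) / 2"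

text \<open>Vertices: Inl i for vertices i of G1;
  Inr (i, Inl v) the copy of vertex v of G2 in the i-th copy of S(G2);
  Inr (i, Inr e) the subdivision vertex of edge e in the i-th copy.\<close>
definition corona_edge_V :: "'a set \<Rightarrow> 'b set \<Rightarrow> 'b set set \<Rightarrow> ('a + ('a \<times> ('b + 'b set))) set" where
  "corona_edge_V V1 V2 E2 =
     Inl ` V1 \<union> {Inr (i, Inl v) | i v. i \<in> V1 \<and> v \<in> V2}
             \<union> {Inr (i, Inr e) | i e. i \<in> V1 \<and> e \<in> E2}"

definition corona_edge_E :: "'a set \<Rightarrow> 'a set set \<Rightarrow> 'b set \<Rightarrow> 'b set set
    \<Rightarrow> ('a + ('a \<times> ('b + 'b set))) set set" where
  "corona_edge_E V1 E1 V2 E2 =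
     {{Inl a, Inl b} | a b. {a, b} \<in> E1}
     \<union> {{Inr (i, Inl v), Inr (i, Inr e)} | i v e. i \<in> V1 \<and> e \<in> E2 \<and> v \<in> e}
     \<union> {{Inl i, Inr (i, Inr e)} | i e. i \<in> V1 \<and> e \<in> E2}"

definition adj_matrix :: "nat \<Rightarrow> nat set set \<Rightarrow> real mat" where
  "adj_matrix n E = mat n n (\<lambda>(i, j). if {i, j} \<in> E then 1 else 0)"

definition lap_matrix :: "nat \<Rightarrow> nat set set \<Rightarrow> real mat" where
  "lap_matrix n E = mat n n (\<lambda>(i, j). laplacian {0..<n} E i j)"

definition mat_trace :: "real mat \<Rightarrow> real" where
  "mat_trace A = (\<Sum>i<dim_row A. A $$ (i, i))"

end

theory Submission
  imports Defs "Jordan_Normal_Form.Schur_Decomposition"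
begin

definition nbr :: "'v set \<Rightarrow> 'v set set \<Rightarrow> 'v \<Rightarrow> 'v set" where
  "nbr V E w = {u\<in>V. {u,w}\<in>E}"

definition lapv :: "'v set \<Rightarrow> 'v set set \<Rightarrow> ('v \<Rightarrow> real) \<Rightarrow> 'v \<Rightarrow> real" where
  "lapv V E x w = (\<Sum>y\<in>V. laplacian V E w y * x y)"

lemma simple_finite: "simple_graph V E \<Longrightarrow> finite V"
  by (simp add: simple_graph_def)

lemma simple_edge: "simple_graph V E \<Longrightarrow> e \<in> E \<Longrightarrow> \<exists>u v. e = {u,v} \<and> u\<in>V \<and> v\<in>V \<and> u\<noteq>v"
  unfolding simple_graph_def by blast

lemma simple_noloop: "simple_graph V E \<Longrightarrow> {w,w} \<notin> E"
  using simple_edge[of V E "{w,w}"] by (auto simp: doubleton_eq_iff)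

lemma simple_mem: "simple_graph V E \<Longrightarrow> {a,b} \<in> E \<Longrightarrow> a \<in> V \<and> b \<in> V"
  using simple_edge[of V E "{a,b}"] by (auto simp: doubleton_eq_iff)

lemma nbr_finite: "simple_graph V E \<Longrightarrow> finite (nbr V E w)"
  unfolding nbr_def using simple_finite[of V E] by auto

lemma lapv_nbr:
  assumes G: "simple_graph V E" and w: "w \<in> V"
  shows "lapv V E x w = (\<Sum>u\<in>nbr V E w. x w - x u)"
proof -
  have fin: "finite V" using G simple_finite by auto
  have "lapv V E x w = laplacian V E w w * x w + (\<Sum>y\<in>V-{w}. laplacian V E w y * x y)"
    unfolding lapv_def using sum.remove[OF fin w] by simp
  also have "laplacian V E w w = real (card (nbr V E w))"
    by (simp add: laplacian_def gdegree_def nbr_def)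
  also have "(\<Sum>y\<in>V-{w}. laplacian V E w y * x y) = (\<Sum>y\<in>V-{w}. if {y,w}\<in>E then - x y else 0)"
    by (rule sum.cong) (auto simp: laplacian_def insert_commute)
  also have "\<dots> = (\<Sum>y\<in>{y\<in>V-{w}. {y,w}\<in>E}. - x y)"
    by (rule sym, rule sum.inter_filter) (use fin in auto)
  also have "{y\<in>V-{w}. {y,w}\<in>E} = nbr V E w"
    using simple_noloop[OF G, of w] by (auto simp: nbr_def)
  finally show ?thesis
    by (simp add: sum_subtractf sum_negf)
qed

lemma sum_nbr_if:
  assumes G: "simple_graph V E"
  shows "(\<Sum>u\<in>nbr V E w. f u) = (\<Sum>u\<in>V. if {u,w}\<in>E then f u else 0)"
  using simple_finite[OF G] by (simp add: nbr_def sum.inter_filter)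

lemma sym_sum:
  assumes G: "simple_graph V E"
  shows "(\<Sum>w\<in>V. \<Sum>u\<in>nbr V E w. f w u) = (\<Sum>w\<in>V. \<Sum>u\<in>nbr V E w. f u w)"
proof -
  have "(\<Sum>w\<in>V. \<Sum>u\<in>nbr V E w. f w u) = (\<Sum>w\<in>V. \<Sum>u\<in>V. if {u,w}\<in>E then f w u else 0)"
    by (simp add: sum_nbr_if[OF G])
  also have "\<dots> = (\<Sum>u\<in>V. \<Sum>w\<in>V. if {u,w}\<in>E then f w u else 0)"
    by (rule sum.swap)
  also have "\<dots> = (\<Sum>u\<in>V. \<Sum>w\<in>V. if {w,u}\<in>E then f w u else 0)"
    by (simp add: insert_commute)
  also have "\<dots> = (\<Sum>w\<in>V. \<Sum>u\<in>nbr V E w. f u w)"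
    by (simp add: sum_nbr_if[OF G])
  finally show ?thesis .
qed

lemma energy:
  assumes G: "simple_graph V E"
  shows "(\<Sum>w\<in>V. x w * lapv V E x w) = (\<Sum>w\<in>V. \<Sum>u\<in>nbr V E w. (x w - x u)^2) / 2"
proof -
  have A: "(\<Sum>w\<in>V. x w * lapv V E x w) = (\<Sum>w\<in>V. \<Sum>u\<in>nbr V E w. x w * (x w - x u))"
    by (rule sum.cong) (auto simp: lapv_nbr[OF G] sum_distrib_left)
  also have "\<dots> = (\<Sum>w\<in>V. \<Sum>u\<in>nbr V E w. x u * (x u - x w))"
    by (rule sym_sum[OF G])
  finally have B: "(\<Sum>w\<in>V. x w * lapv V E x w) = (\<Sum>w\<in>V. \<Sum>u\<in>nbr V E w. x u * (x u - x w))" .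
  have "2 * (\<Sum>w\<in>V. x w * lapv V E x w) = (\<Sum>w\<in>V. \<Sum>u\<in>nbr V E w. x w * (x w - x u) + x u * (x u - x w))"
    using A B by (simp add: sum.distrib)
  also have "\<dots> = (\<Sum>w\<in>V. \<Sum>u\<in>nbr V E w. (x w - x u)^2)"
    by (rule sum.cong[OF refl], rule sum.cong[OF refl]) (simp add: power2_eq_square algebra_simps)
  finally show ?thesis by simp
qed

lemma energy_zero_const:
  fixes x :: "'v \<Rightarrow> real"
  assumes G: "simple_graph V E" and C: "connected_graph V E"
    and Z: "(\<Sum>w\<in>V. \<Sum>u\<in>nbr V E w. (x w - x u)^2) = 0"
    and u: "u \<in> V" and v: "v \<in> V"
  shows "x u = x v"
proof -
  have fin: "finite V" using simple_finite[OF G] .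
  have edge: "x a = x b" if "{a,b} \<in> E" for a b
  proof -
    have ab: "a \<in> V" "b \<in> V" using simple_mem[OF G that] by auto
    have "\<forall>w\<in>V. (\<Sum>u\<in>nbr V E w. (x w - x u)^2) = 0"
      using Z fin sum_nonneg_eq_0_iff[of V "\<lambda>w. \<Sum>u\<in>nbr V E w. (x w - x u)^2"]
      by (metis (no_types, lifting) sum_nonneg zero_le_power2)
    hence "(\<Sum>u\<in>nbr V E b. (x b - x u)^2) = 0" using ab by auto
    hence "\<forall>u\<in>nbr V E b. (x b - x u)^2 = 0"
      using nbr_finite[OF G] by (subst (asm) sum_nonneg_eq_0_iff) auto
    moreover have "a \<in> nbr V E b" using ab that by (simp add: nbr_def)
    ultimately show ?thesis by auto
  qed
  have "(\<lambda>a b. {a,b}\<in>E)\<^sup>*\<^sup>* u v" using C u v unfolding connected_graph_def by auto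
  then show ?thesis
  proof (induction rule: rtranclp_induct)
    case base then show ?case by simp
  next
    case (step y z) then show ?case using edge by metis
  qed
qed

lemma harmonic_const:
  assumes G: "simple_graph V E" and C: "connected_graph V E"
    and H: "\<And>w. w \<in> V \<Longrightarrow> lapv V E x w = 0" and u: "u \<in> V" and v: "v \<in> V"
  shows "x u = x v"
proof -
  have "(\<Sum>w\<in>V. x w * lapv V E x w) = 0" using H by simp
  then show ?thesis using energy[OF G, of x] energy_zero_const[OF G C _ u v, of x] by simp
qed

lemma lapv_diff: "lapv V E (\<lambda>y. x y - z y) w = lapv V E x w - lapv V E z w"
  unfolding lapv_def by (simp add: sum_subtractf right_diff_distrib)

lemma resistance_eq:
  assumes G: "simple_graph V E" and C: "connected_graph V E" and u: "u \<in> V" and v: "v \<in> V"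
    and X: "\<And>w. w \<in> V \<Longrightarrow> lapv V E x w = (if w = u then 1 else 0) - (if w = v then 1 else 0)"
  shows "resistance V E u v = x u - x v"
  unfolding resistance_def
proof (rule the_equality)
  show "\<exists>x'. (\<forall>w\<in>V. (\<Sum>y\<in>V. laplacian V E w y * x' y) =
               (if w = u then 1 else 0) - (if w = v then 1 else 0)) \<and> x u - x v = x' u - x' v"
    using X unfolding lapv_def by blast
next
  fix r assume "\<exists>x'. (\<forall>w\<in>V. (\<Sum>y\<in>V. laplacian V E w y * x' y) =
               (if w = u then 1 else 0) - (if w = v then 1 else 0)) \<and> r = x' u - x' v"
  then obtain y where Y: "\<And>w. w \<in> V \<Longrightarrow> lapv V E y w = (if w = u then 1 else 0) - (if w = v then 1 else 0)"
    and r: "r = y u - y v" unfolding lapv_def by blast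
  have "(\<lambda>t. x t - y t) u = (\<lambda>t. x t - y t) v"
    by (rule harmonic_const[OF G C _ u v]) (simp add: lapv_diff X Y)
  then show "r = x u - x v" using r by simp
qed

lemma resistance_self:
  assumes G: "simple_graph V E" and C: "connected_graph V E" and u: "u \<in> V"
  shows "resistance V E u u = 0"
  using resistance_eq[OF G C u u, of "\<lambda>_. 0"] by (simp add: lapv_def)

lemma laplacian_sym: "laplacian V E u v = laplacian V E v u"
  by (simp add: laplacian_def insert_commute)

lemma lapv_colsum:
  assumes G: "simple_graph V E"
  shows "(\<Sum>w\<in>V. lapv V E x w) = 0"
proof -
  have "(\<Sum>w\<in>V. lapv V E x w) = (\<Sum>y\<in>V. x y * (\<Sum>w\<in>V. laplacian V E y w * 1))"
    unfolding lapv_def by (subst sum.swap) (simp add: sum_distrib_left laplacian_sym mult.commute)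
  also have "\<dots> = (\<Sum>y\<in>V. x y * lapv V E (\<lambda>_. 1) y)" by (simp add: lapv_def)
  also have "\<dots> = 0" by (rule sum.neutral) (simp add: lapv_nbr[OF G])
  finally show ?thesis .
qed

lemma Kvec:
  assumes g: "bij_betw g {0..<n} V" and i: "i < n" and y: "y \<in> carrier_vec n"
  shows "(mat n n (\<lambda>(i,j). laplacian V E (g i) (g j) + 1) *\<^sub>v y) $ i
     = lapv V E (\<lambda>w. y $ (inv_into {0..<n} g w)) (g i) + (\<Sum>u\<in>V. y $ (inv_into {0..<n} g u))"
proof -
  let ?x = "\<lambda>w. y $ (inv_into {0..<n} g w)"
  have inv: "inv_into {0..<n} g (g j) = j" if "j < n" for j
    using g that by (simp add: bij_betw_def inv_into_f_f)
  have "(mat n n (\<lambda>(i,j). laplacian V E (g i) (g j) + 1) *\<^sub>v y) $ i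
      = (\<Sum>j=0..<n. (laplacian V E (g i) (g j) + 1) * y $ j)"
    using i y by (simp add: scalar_prod_def)
  also have "\<dots> = (\<Sum>j=0..<n. (laplacian V E (g i) (g j) + 1) * ?x (g j))"
    by (rule sum.cong) (auto simp: inv)
  also have "\<dots> = (\<Sum>u\<in>V. (laplacian V E (g i) u + 1) * ?x u)"
    by (rule sum.reindex_bij_betw[OF g])
  also have "\<dots> = lapv V E ?x (g i) + (\<Sum>u\<in>V. ?x u)"
    by (simp add: lapv_def algebra_simps sum.distrib)
  finally show ?thesis .
qed

lemma lap_exists:
  assumes G: "simple_graph V E" and C: "connected_graph V E" and b: "(\<Sum>w\<in>V. b w) = 0"
  shows "\<exists>x. \<forall>w\<in>V. lapv V E x w = b w"
proof -
  have fin: "finite V" using simple_finite[OF G] .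
  define n where "n = card V"
  have npos: "n > 0" using C fin unfolding connected_graph_def n_def by auto
  obtain g where g: "bij_betw g {0..<n} V"
    using ex_bij_betw_nat_finite[OF fin] unfolding n_def by auto
  define K where "K = mat n n (\<lambda>(i,j). laplacian V E (g i) (g j) + 1)"
  have K: "K \<in> carrier_mat n n" unfolding K_def by simp
  have gi: "g (inv_into {0..<n} g w) = w" if "w \<in> V" for w
    using g that by (simp add: bij_betw_def f_inv_into_f)
  have invr: "inv_into {0..<n} g w < n" if "w \<in> V" for w
    using g that by (metis atLeastLessThan_iff bij_betw_def inv_into_into)
  have gV: "g i \<in> V" if "i < n" for i using g that by (auto simp: bij_betw_def)
  have key: "lapv V E (\<lambda>w. y $ (inv_into {0..<n} g w)) w + (\<Sum>u\<in>V. y $ (inv_into {0..<n} g u))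
            = c $ (inv_into {0..<n} g w)"
    if y: "y \<in> carrier_vec n" and Ky: "K *\<^sub>v y = c" and w: "w \<in> V" for y c w
    using Kvec[OF g invr[OF w] y, of E] Ky gi[OF w] unfolding K_def by simp
  have sumx: "(\<Sum>u\<in>V. x u) = 0"
    if "\<And>w. w \<in> V \<Longrightarrow> lapv V E x w + (\<Sum>u\<in>V. x u) = d w" and "(\<Sum>w\<in>V. d w) = 0" for x d
  proof -
    have "(\<Sum>w\<in>V. lapv V E x w + (\<Sum>u\<in>V. x u)) = 0" using that by simp
    hence "real n * (\<Sum>u\<in>V. x u) = 0" using lapv_colsum[OF G, of x]
      by (simp add: sum.distrib n_def)
    thus ?thesis using npos by simp
  qed
  have detK: "det K \<noteq> 0"
  proof
    assume "det K = 0"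
    then obtain y where y: "y \<in> carrier_vec n" "y \<noteq> 0\<^sub>v n" "K *\<^sub>v y = 0\<^sub>v n"
      using det_0_iff_vec_prod_zero[OF K] by auto
    define x where "x = (\<lambda>w. y $ (inv_into {0..<n} g w))"
    have e: "lapv V E x w + (\<Sum>u\<in>V. x u) = 0" if "w \<in> V" for w
      using key[OF y(1) y(3) that] invr[OF that] unfolding x_def by simp
    have s: "(\<Sum>u\<in>V. x u) = 0" by (rule sumx[of x "\<lambda>_. 0"]) (use e in auto)
    have h: "lapv V E x w = 0" if "w \<in> V" for w using e[OF that] s by simp
    obtain w0 where w0: "w0 \<in> V" using C unfolding connected_graph_def by auto
    have c: "x u = x w0" if "u \<in> V" for u by (rule harmonic_const[OF G C h that w0])
    have "real n * x w0 = 0" using s c by (simp add: n_def)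
    hence x0: "x w0 = 0" using npos by simp
    have "y = 0\<^sub>v n"
    proof (rule eq_vecI)
      fix i assume i: "i < dim_vec (0\<^sub>v n)"
      hence "i < n" by simp
      have "y $ i = x (g i)" unfolding x_def using g \<open>i < n\<close> by (simp add: bij_betw_def inv_into_f_f)
      also have "\<dots> = 0" using c[OF gV[OF \<open>i<n\<close>]] x0 by simp
      finally show "y $ i = 0\<^sub>v n $ i" using \<open>i<n\<close> by simp
    qed (use y in simp)
    with y(2) show False by simp
  qed
  from det_non_zero_imp_unit[OF K detK, of "()"]
  obtain B where B: "B \<in> carrier_mat n n" and KB: "K * B = 1\<^sub>m n"
    unfolding Units_def ring_mat_def by auto
  define bv where "bv = vec n (\<lambda>i. b (g i))"
  define y where "y = B *\<^sub>v bv"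
  have y: "y \<in> carrier_vec n" unfolding y_def bv_def using B by simp
  have Ky: "K *\<^sub>v y = bv" unfolding y_def
    using assoc_mult_mat_vec[OF K B, of bv] KB by (simp add: bv_def)
  define x where "x = (\<lambda>w. y $ (inv_into {0..<n} g w))"
  have e: "lapv V E x w + (\<Sum>u\<in>V. x u) = b w" if "w \<in> V" for w
    using key[OF y Ky that] invr[OF that] gi[OF that] unfolding x_def bv_def by simp
  have s: "(\<Sum>u\<in>V. x u) = 0" by (rule sumx[OF e b])
  show ?thesis using e s by auto
qed

lemma trace_comm:
  assumes X: "X \<in> carrier_mat n m" and Y: "Y \<in> carrier_mat m n"
  shows "mat_trace (X * Y) = mat_trace (Y * X)"
proof -
  have "mat_trace (X * Y) = (\<Sum>i<n. \<Sum>k<m. X $$ (i,k) * Y $$ (k,i))"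
    unfolding mat_trace_def using X Y
    by (auto simp: scalar_prod_def atLeast0LessThan intro!: sum.cong)
  also have "\<dots> = (\<Sum>k<m. \<Sum>i<n. Y $$ (k,i) * X $$ (i,k))"
    by (subst sum.swap) (simp add: mult.commute)
  also have "\<dots> = mat_trace (Y * X)"
    unfolding mat_trace_def using X Y
    by (auto simp: scalar_prod_def atLeast0LessThan intro!: sum.cong)
  finally show ?thesis .
qed

lemma ut_inverse_diag:
  fixes T X :: "real mat"
  assumes T: "T \<in> carrier_mat n n" and X: "X \<in> carrier_mat n n"
    and ut: "upper_triangular T" and TX: "T * X = 1\<^sub>m n" and i: "i < n"
  shows "X $$ (i,i) = 1 / T $$ (i,i)"
proof -
  have "det T * det X = 1" using det_mult[OF T X] TX by simp
  hence "det T \<noteq> 0" by auto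
  hence "prod_list (diag_mat T) \<noteq> 0" using det_upper_triangular[OF ut T] by simp
  hence nz: "T $$ (k,k) \<noteq> 0" if "k < n" for k
    using that T by (auto simp: diag_mat_def prod_list_zero_iff)
  have entry: "(\<Sum>l\<in>{0..<n}. T $$ (k,l) * X $$ (l,j)) = (if k = j then 1 else 0)"
    if "k < n" "j < n" for k j
    using arg_cong[OF TX, of "\<lambda>M. M $$ (k,j)"] that T X by (simp add: scalar_prod_def)
  have low: "\<forall>i. k \<le> i \<longrightarrow> i < n \<longrightarrow> j < i \<longrightarrow> X $$ (i,j) = 0" if "k \<le> n" for k j
    using that
  proof (induction k rule: inc_induct)
    case base then show ?case by auto
  next
    case (step k)
    show ?case
    proof (intro allI impI)
      fix i assume ki: "k \<le> i" "i < n" "j < i"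
      show "X $$ (i,j) = 0"
      proof (cases "i = k")
        case False then show ?thesis using step.IH ki by auto
      next
        case True
        have jn: "j < n" using ki by simp
        have "(\<Sum>l\<in>{0..<n}. T $$ (k,l) * X $$ (l,j)) = T $$ (k,k) * X $$ (k,j)
                + (\<Sum>l\<in>{0..<n}-{k}. T $$ (k,l) * X $$ (l,j))"
          using ki True by (subst sum.remove[of _ k]) auto
        also have "(\<Sum>l\<in>{0..<n}-{k}. T $$ (k,l) * X $$ (l,j)) = 0"
        proof (rule sum.neutral, intro ballI)
          fix l assume l: "l \<in> {0..<n}-{k}"
          show "T $$ (k,l) * X $$ (l,j) = 0"
          proof (cases "l < k")
            case True then show ?thesis using upper_triangularD[OF ut True] ki \<open>i=k\<close> T by auto
          next
            case False then show ?thesis using step.IH l ki \<open>i=k\<close> by auto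
          qed
        qed
        finally have "T $$ (k,k) * X $$ (k,j) = 0" using entry[OF _ jn, of k] ki True by simp
        then show ?thesis using nz[of k] ki True by simp
      qed
    qed
  qed
  have "(\<Sum>l\<in>{0..<n}. T $$ (i,l) * X $$ (l,i)) = T $$ (i,i) * X $$ (i,i)
          + (\<Sum>l\<in>{0..<n}-{i}. T $$ (i,l) * X $$ (l,i))"
    using i by (subst sum.remove[of _ i]) auto
  also have "(\<Sum>l\<in>{0..<n}-{i}. T $$ (i,l) * X $$ (l,i)) = 0"
  proof (rule sum.neutral, intro ballI)
    fix l assume l: "l \<in> {0..<n}-{i}"
    show "T $$ (i,l) * X $$ (l,i) = 0"
    proof (cases "l < i")
      case True then show ?thesis using upper_triangularD[OF ut True] i T by auto
    next
      case False then show ?thesis using low[of 0 i] l by auto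
    qed
  qed
  finally have "T $$ (i,i) * X $$ (i,i) = 1" using entry[OF i i] by simp
  then show ?thesis using nz[OF i] by (simp add: field_simps)
qed

lemma trace_inverse_shift:
  fixes A Ci :: "real mat" and \<mu> :: "nat \<Rightarrow> real"
  assumes A: "A \<in> carrier_mat n n" and Ci: "Ci \<in> carrier_mat n n"
    and cp: "char_poly A = (\<Prod>i<n. [:- \<mu> i, 1:])"
    and inv: "(A + r \<cdot>\<^sub>m 1\<^sub>m n) * Ci = 1\<^sub>m n"
  shows "mat_trace Ci = (\<Sum>i<n. 1 / (\<mu> i + r))"
proof -
  define es where "es = map \<mu> [0..<n]"
  have cp': "char_poly A = (\<Prod>e\<leftarrow>es. [:- e, 1:])"
    unfolding cp es_def
    by (simp add: prod.distinct_set_conv_list[symmetric] atLeast0LessThan o_def)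
  obtain B P Q where sd: "schur_decomposition A es = (B,P,Q)" by (cases "schur_decomposition A es") auto
  from schur_decomposition[OF A cp' sd]
  have sw: "similar_mat_wit A B P Q" and ut: "upper_triangular B" and dg: "diag_mat B = es" by auto
  from sw A have B: "B \<in> carrier_mat n n" and P: "P \<in> carrier_mat n n" and Q: "Q \<in> carrier_mat n n"
    and PQ: "P * Q = 1\<^sub>m n" and QP: "Q * P = 1\<^sub>m n" and AB: "A = P * B * Q"
    unfolding similar_mat_wit_def Let_def by auto
  define D where "D = B + r \<cdot>\<^sub>m 1\<^sub>m n"
  have D: "D \<in> carrier_mat n n" unfolding D_def using B by simp
  have utD: "upper_triangular D" using ut B unfolding D_def by (auto simp: upper_triangular_def)
  have Ddiag: "D $$ (i,i) = \<mu> i + r" if "i < n" for i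
    using dg that B unfolding D_def es_def diag_mat_def
    by (auto dest!: arg_cong[of _ _ "\<lambda>l. l ! i"])
  have Ar: "A + r \<cdot>\<^sub>m 1\<^sub>m n = P * D * Q"
  proof -
    have "P * D * Q = P * B * Q + P * (r \<cdot>\<^sub>m 1\<^sub>m n) * Q"
      unfolding D_def using P B Q
      by (simp add: mult_add_distrib_mat add_mult_distrib_mat[of _ n n])
    also have "P * (r \<cdot>\<^sub>m 1\<^sub>m n) * Q = r \<cdot>\<^sub>m 1\<^sub>m n"
    proof -
      have "P * (r \<cdot>\<^sub>m 1\<^sub>m n) = r \<cdot>\<^sub>m P"
        using mult_smult_distrib[OF P one_carrier_mat, where k=r] P by simp
      moreover have "(r \<cdot>\<^sub>m P) * Q = r \<cdot>\<^sub>m (P * Q)" by (rule mult_smult_assoc_mat[OF P Q])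
      ultimately show ?thesis using PQ by simp
    qed
    finally show ?thesis using AB by simp
  qed
  define X where "X = Q * Ci * P"
  have X: "X \<in> carrier_mat n n" unfolding X_def using Q Ci P by simp
  have DQ: "D * Q = Q * (A + r \<cdot>\<^sub>m 1\<^sub>m n)"
  proof -
    have "Q * (A + r \<cdot>\<^sub>m 1\<^sub>m n) = Q * (P * D * Q)" using Ar by simp
    also have "\<dots> = (Q * P) * D * Q" using P Q D by (simp add: assoc_mult_mat[of _ n n _ n _ n])
    finally show ?thesis using QP D by simp
  qed
  have DX: "D * X = 1\<^sub>m n"
  proof -
    have "D * X = (D * Q) * Ci * P"
      unfolding X_def using P Q D Ci by (simp add: assoc_mult_mat[of _ n n _ n _ n])
    also have "\<dots> = Q * ((A + r \<cdot>\<^sub>m 1\<^sub>m n) * Ci) * P"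
      unfolding DQ using P Q D Ci A by (simp add: assoc_mult_mat[of _ n n _ n _ n])
    also have "\<dots> = 1\<^sub>m n" using inv QP Q P by simp
    finally show ?thesis .
  qed
  have CiX: "Ci = P * X * Q"
  proof -
    have "P * X * Q = (P * Q) * Ci * (P * Q)"
      unfolding X_def using P Q Ci by (simp add: assoc_mult_mat[of _ n n _ n _ n])
    then show ?thesis using PQ Ci by simp
  qed
  have "mat_trace Ci = mat_trace (P * (X * Q))"
    using CiX P X Q by (simp add: assoc_mult_mat[of _ n n _ n _ n])
  also have "\<dots> = mat_trace ((X * Q) * P)"
    by (rule trace_comm[OF P]) (use X Q in simp)
  also have "\<dots> = mat_trace X" using X Q P QP by (simp add: assoc_mult_mat[of _ n n _ n _ n])
  also have "\<dots> = (\<Sum>i<n. X $$ (i,i))" unfolding mat_trace_def using X by simp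
  also have "\<dots> = (\<Sum>i<n. 1 / (\<mu> i + r))"
    by (rule sum.cong) (auto simp: ut_inverse_diag[OF D X utD DX] Ddiag)
  finally show ?thesis .
qed

lemma sum_if_mult: "finite S \<Longrightarrow> u \<in> S \<Longrightarrow> (\<Sum>k\<in>S. (if u = k then a else 0) * f k) = a * (f u :: real)"
proof -
  assume "finite S" "u \<in> S"
  have "(\<Sum>k\<in>S. (if u = k then a else 0) * f k) = (\<Sum>k\<in>S. if k = u then a * f u else 0)"
    by (rule sum.cong) auto
  then show ?thesis using \<open>finite S\<close> \<open>u \<in> S\<close> by simp
qed

locale reg2 =
  fixes n2 r2 :: nat and E2 :: "nat set set"
  assumes simp2: "simple_graph {0..<n2} E2" and reg: "regular_graph {0..<n2} E2 r2" and r1: "r2 \<ge> 1"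
begin

abbreviation "V2 \<equiv> {0..<n2}"

lemma finE2: "finite E2"
proof -
  have "E2 \<subseteq> Pow V2" using simp2 unfolding simple_graph_def by auto
  then show ?thesis by (rule finite_subset) simp
qed

lemma edge2: assumes "e \<in> E2" shows "e \<subseteq> V2" "card e = 2" "finite e"
  using simple_edge[OF simp2 assms] by auto

lemma noloop2: "{w,w} \<notin> E2" using simple_noloop[OF simp2] .

lemma nbr_deg: "v \<in> V2 \<Longrightarrow> card (nbr V2 E2 v) = r2"
  using reg unfolding regular_graph_def gdegree_def nbr_def by auto

lemma inc_deg: assumes v: "v \<in> V2" shows "card {e\<in>E2. v\<in>e} = r2"
proof -
  have "{e\<in>E2. v\<in>e} = (\<lambda>u. {u,v}) ` nbr V2 E2 v"
  proof (rule equalityI; rule subsetI)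
    fix e assume e: "e \<in> {e\<in>E2. v\<in>e}"
    then have eE: "e \<in> E2" and ve: "v \<in> e" by auto
    obtain a b where ab: "e = {a,b}" "a \<in> V2" "b \<in> V2" "a \<noteq> b" using simple_edge[OF simp2 eE] by blast
    show "e \<in> (\<lambda>u. {u,v}) ` nbr V2 E2 v"
    proof (cases "a = v")
      case True
      have e': "e = {b,v}" using ab True by auto
      have "b \<in> nbr V2 E2 v" using eE e' ab by (simp add: nbr_def)
      then show ?thesis using e' by (rule rev_image_eqI)
    next
      case False then have bv: "b = v" using ve ab by auto
      have e': "e = {a,v}" using ab bv by auto
      have "a \<in> nbr V2 E2 v" using eE e' ab by (simp add: nbr_def)
      then show ?thesis using e' by (rule rev_image_eqI)
    qed
  next
    fix e assume "e \<in> (\<lambda>u. {u,v}) ` nbr V2 E2 v"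
    then obtain u where "u \<in> nbr V2 E2 v" "e = {u,v}" by blast
    then show "e \<in> {e\<in>E2. v\<in>e}" unfolding nbr_def by simp
  qed
  moreover have "inj_on (\<lambda>u. {u,v}) (nbr V2 E2 v)"
  proof (rule inj_onI)
    fix x y assume "x \<in> nbr V2 E2 v" "y \<in> nbr V2 E2 v" "{x,v} = {y,v}"
    then show "x = y" using noloop2 unfolding nbr_def by (metis doubleton_eq_iff mem_Collect_eq)
  qed
  ultimately show ?thesis using nbr_deg[OF v] by (simp add: card_image)
qed

definition BB :: "nat \<Rightarrow> nat \<Rightarrow> real" where
  "BB v w = (if v = w then real r2 else 0) + (if {v,w} \<in> E2 then 1 else 0)"

lemma card_BB: assumes v: "v \<in> V2" and w: "w \<in> V2"
  shows "real (card {e\<in>E2. v\<in>e \<and> w\<in>e}) = BB v w"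
proof (cases "v = w")
  case True
  have "{e\<in>E2. v\<in>e \<and> w\<in>e} = {e\<in>E2. v\<in>e}" using True by simp
  moreover have "BB v w = real r2" unfolding BB_def using True noloop2[of w] by simp
  ultimately show ?thesis using inc_deg[OF v] by simp
next
  case False
  have ev: "e = {v,w}" if h: "e \<in> E2" "v \<in> e" "w \<in> e" for e
  proof -
    obtain a b where ab: "e = {a,b}" using simple_edge[OF simp2 h(1)] by blast
    show ?thesis using ab h(2,3) False by blast
  qed
  show ?thesis
  proof (cases "{v,w} \<in> E2")
    case True
    have "{e\<in>E2. v\<in>e \<and> w\<in>e} = {{v,w}}" using ev True by blast
    then have "card {e\<in>E2. v\<in>e \<and> w\<in>e} = 1" by (simp only: is_singleton_altdef[symmetric] is_singletonI)
    then show ?thesis using True False by (simp add: BB_def)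
  next
    case F2: False
    have "{e\<in>E2. v\<in>e \<and> w\<in>e} = {}" using ev F2 by blast
    then have "card {e\<in>E2. v\<in>e \<and> w\<in>e} = 0" by (simp only: card.empty)
    then show ?thesis using F2 False by (simp add: BB_def)
  qed
qed

lemma BB_sym: "BB v w = BB w v" by (simp add: BB_def insert_commute)

lemma sum_inc:
  assumes v: "v \<in> V2"
  shows "(\<Sum>e\<in>{e\<in>E2. v\<in>e}. \<Sum>w\<in>e. g w) = (\<Sum>w\<in>V2. BB v w * g w)"
proof -
  have "(\<Sum>e\<in>{e\<in>E2. v\<in>e}. \<Sum>w\<in>e. g w) = (\<Sum>e\<in>{e\<in>E2. v\<in>e}. \<Sum>w\<in>V2. if w \<in> e then g w else 0)"
  proof (rule sum.cong[OF refl])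
    fix e assume "e \<in> {e\<in>E2. v\<in>e}"
    hence eV: "e \<subseteq> V2" using edge2 by auto
    have "(\<Sum>w\<in>V2. if w \<in> e then g w else 0) = (\<Sum>w\<in>{w\<in>V2. w\<in>e}. g w)"
      by (rule sym, rule sum.inter_filter) simp
    also have "{w\<in>V2. w\<in>e} = e" using eV by auto
    finally show "(\<Sum>w\<in>e. g w) = (\<Sum>w\<in>V2. if w \<in> e then g w else 0)" by simp
  qed
  also have "\<dots> = (\<Sum>w\<in>V2. \<Sum>e\<in>{e\<in>E2. v\<in>e}. if w \<in> e then g w else 0)" by (rule sum.swap)
  also have "\<dots> = (\<Sum>w\<in>V2. g w * real (card {e\<in>E2. v\<in>e \<and> w\<in>e}))"
  proof (rule sum.cong[OF refl])
    fix w assume "w \<in> V2"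
    have "(\<Sum>e\<in>{e\<in>E2. v\<in>e}. if w \<in> e then g w else 0) = (\<Sum>e\<in>{e\<in>{e\<in>E2. v\<in>e}. w\<in>e}. g w)"
      by (rule sym, rule sum.inter_filter) (use finE2 in auto)
    also have "{e\<in>{e\<in>E2. v\<in>e}. w\<in>e} = {e\<in>E2. v\<in>e \<and> w\<in>e}" by auto
    finally show "(\<Sum>e\<in>{e\<in>E2. v\<in>e}. if w \<in> e then g w else 0) = g w * real (card {e\<in>E2. v\<in>e \<and> w\<in>e})"
      by simp
  qed
  also have "\<dots> = (\<Sum>w\<in>V2. BB v w * g w)"
    by (rule sum.cong[OF refl]) (simp add: card_BB[OF v])
  finally show ?thesis .
qed

lemma sum_all: "(\<Sum>e\<in>E2. \<Sum>w\<in>e. g w) = real r2 * (\<Sum>w\<in>V2. g w)"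
proof -
  have "(\<Sum>e\<in>E2. \<Sum>w\<in>e. g w) = (\<Sum>e\<in>E2. \<Sum>w\<in>V2. if w \<in> e then g w else 0)"
  proof (rule sum.cong[OF refl])
    fix e assume "e \<in> E2"
    hence eV: "e \<subseteq> V2" using edge2 by auto
    have "(\<Sum>w\<in>V2. if w \<in> e then g w else 0) = (\<Sum>w\<in>{w\<in>V2. w\<in>e}. g w)"
      by (rule sym, rule sum.inter_filter) simp
    also have "{w\<in>V2. w\<in>e} = e" using eV by auto
    finally show "(\<Sum>w\<in>e. g w) = (\<Sum>w\<in>V2. if w \<in> e then g w else 0)" by simp
  qed
  also have "\<dots> = (\<Sum>w\<in>V2. \<Sum>e\<in>E2. if w \<in> e then g w else 0)" by (rule sum.swap)
  also have "\<dots> = (\<Sum>w\<in>V2. real r2 * g w)"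
  proof (rule sum.cong[OF refl])
    fix w assume w: "w \<in> V2"
    have "(\<Sum>e\<in>E2. if w \<in> e then g w else 0) = (\<Sum>e\<in>{e\<in>E2. w\<in>e}. g w)"
      by (rule sym, rule sum.inter_filter) (use finE2 in auto)
    then show "(\<Sum>e\<in>E2. if w \<in> e then g w else 0) = real r2 * g w"
      using inc_deg[OF w] by simp
  qed
  finally show ?thesis by (simp add: sum_distrib_left)
qed

lemma m2_eq: "2 * real (card E2) = real n2 * real r2"
proof -
  have "(\<Sum>e\<in>E2. \<Sum>w\<in>e. (1::real)) = real r2 * (\<Sum>w\<in>V2. 1)" by (rule sum_all)
  moreover have "(\<Sum>e\<in>E2. \<Sum>w\<in>e. (1::real)) = (\<Sum>e\<in>E2. 2)"
    by (rule sum.cong) (auto simp: edge2)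
  ultimately have "real r2 * real n2 = 2 * real (card E2)" by simp
  then show ?thesis by (simp add: mult.commute)
qed

lemma BB_rowsum: "u \<in> V2 \<Longrightarrow> (\<Sum>w\<in>V2. BB u w) = 2 * real r2"
proof -
  assume u: "u \<in> V2"
  have "(\<Sum>w\<in>V2. BB u w) = (\<Sum>e\<in>{e\<in>E2. u\<in>e}. \<Sum>w\<in>e. (1::real))"
    using sum_inc[OF u, of "\<lambda>_. 1"] by simp
  also have "\<dots> = (\<Sum>e\<in>{e\<in>E2. u\<in>e}. 2)" by (rule sum.cong) (auto simp: edge2)
  also have "\<dots> = 2 * real r2" using inc_deg[OF u] by simp
  finally show ?thesis .
qed

definition Cm :: "real mat" where "Cm = lap_matrix n2 E2 + real r2 \<cdot>\<^sub>m 1\<^sub>m n2"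

lemma Cm_carrier: "Cm \<in> carrier_mat n2 n2" by (simp add: Cm_def lap_matrix_def)

lemma lap_entry: "u < n2 \<Longrightarrow> k < n2 \<Longrightarrow> lap_matrix n2 E2 $$ (u,k) = laplacian V2 E2 u k"
  by (simp add: lap_matrix_def)

lemma Cm_entry: assumes "u < n2" "k < n2"
  shows "Cm $$ (u,k) = (if u = k then 3 * real r2 else 0) - BB u k"
proof -
  have "\<And>u. u < n2 \<Longrightarrow> gdegree V2 E2 u = r2" using reg unfolding regular_graph_def by auto
  then show ?thesis using assms noloop2
    by (simp add: Cm_def lap_matrix_def laplacian_def BB_def)
qed

lemma Cm_lapv: assumes y: "y \<in> carrier_vec n2" and u: "u < n2"
  shows "(Cm *\<^sub>v y) $ u = lapv V2 E2 (\<lambda>k. y $ k) u + real r2 * y $ u"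
proof -
  have "(Cm *\<^sub>v y) $ u = (\<Sum>k=0..<n2. (laplacian V2 E2 u k + (if u = k then real r2 else 0)) * y $ k)"
    using y u by (auto simp: Cm_def lap_matrix_def scalar_prod_def intro!: sum.cong)
  also have "\<dots> = lapv V2 E2 (\<lambda>k. y $ k) u + (\<Sum>k=0..<n2. (if u = k then real r2 else 0) * y $ k)"
    by (simp add: lapv_def algebra_simps sum.distrib)
  also have "(\<Sum>k=0..<n2. (if u = k then real r2 else 0) * y $ k) = real r2 * y $ u"
    using u by (simp add: sum_if_mult)
  finally show ?thesis .
qed

lemma det_Cm: "det Cm \<noteq> 0"
proof
  assume "det Cm = 0"
  then obtain y where y: "y \<in> carrier_vec n2" "y \<noteq> 0\<^sub>v n2" "Cm *\<^sub>v y = 0\<^sub>v n2"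
    using det_0_iff_vec_prod_zero[OF Cm_carrier] by auto
  define x where "x = (\<lambda>k. y $ k)"
  have e: "lapv V2 E2 x u + real r2 * x u = 0" if "u \<in> V2" for u
    using Cm_lapv[OF y(1), of u] y(3) that unfolding x_def by simp
  have "(\<Sum>u\<in>V2. x u * (lapv V2 E2 x u + real r2 * x u)) = 0" using e by simp
  hence "(\<Sum>u\<in>V2. x u * lapv V2 E2 x u) + real r2 * (\<Sum>u\<in>V2. (x u)^2) = 0"
    by (simp add: algebra_simps sum.distrib sum_distrib_left power2_eq_square)
  moreover have "(\<Sum>u\<in>V2. x u * lapv V2 E2 x u) \<ge> 0"
    unfolding energy[OF simp2] by (auto intro!: sum_nonneg)
  moreover have "real r2 * (\<Sum>u\<in>V2. (x u)^2) \<ge> 0" by (intro mult_nonneg_nonneg sum_nonneg) auto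
  ultimately have "real r2 * (\<Sum>u\<in>V2. (x u)^2) = 0" by linarith
  hence "(\<Sum>u\<in>V2. (x u)^2) = 0" using r1 by simp
  hence z: "\<forall>u\<in>V2. (x u)^2 = 0" by (subst (asm) sum_nonneg_eq_0_iff) auto
  have "y = 0\<^sub>v n2"
    by (rule eq_vecI) (use z y(1) in \<open>auto simp: x_def\<close>)
  with y(2) show False by simp
qed

definition Ci :: "real mat" where "Ci = the (mat_inverse Cm)"

lemma Ci_props: "Cm * Ci = 1\<^sub>m n2" "Ci * Cm = 1\<^sub>m n2" "Ci \<in> carrier_mat n2 n2"
proof -
  have "mat_inverse Cm \<noteq> None"
    using mat_inverse(1)[OF Cm_carrier, where b="()"] det_non_zero_imp_unit[OF Cm_carrier det_Cm, where b="()"] by blast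
  then obtain B where B: "mat_inverse Cm = Some B" by auto
  then have "Ci = B" by (simp add: Ci_def)
  then show "Cm * Ci = 1\<^sub>m n2" "Ci * Cm = 1\<^sub>m n2" "Ci \<in> carrier_mat n2 n2"
    using mat_inverse(2)[OF Cm_carrier B] by auto
qed

abbreviation "c u v \<equiv> Ci $$ (u,v)"

lemma KI: assumes u: "u < n2" and v: "v < n2"
  shows "(\<Sum>w\<in>V2. BB u w * c w v) = 3 * real r2 * c u v - (if u = v then 1 else 0)"
proof -
  have "(if u = v then 1 else 0) = (Cm * Ci) $$ (u,v)" using Ci_props(1) u v by simp
  also have "\<dots> = (\<Sum>w=0..<n2. Cm $$ (u,w) * c w v)"
    using u v Ci_props(3) Cm_carrier by (simp add: scalar_prod_def)
  also have "\<dots> = (\<Sum>w=0..<n2. (if u = w then 3 * real r2 else 0) * c w v - BB u w * c w v)"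
    by (rule sum.cong) (auto simp: Cm_entry u algebra_simps)
  also have "\<dots> = 3 * real r2 * c u v - (\<Sum>w\<in>V2. BB u w * c w v)"
    using u by (simp add: sum_subtractf sum_if_mult)
  finally show ?thesis by simp
qed

lemma Cm_rowsum: "u < n2 \<Longrightarrow> (\<Sum>l\<in>V2. Cm $$ (u,l)) = real r2"
proof -
  assume u: "u < n2"
  have "(\<Sum>l\<in>V2. Cm $$ (u,l)) = (\<Sum>l\<in>V2. (if u = l then 3 * real r2 else 0) - BB u l)"
    by (rule sum.cong) (auto simp: Cm_entry u)
  also have "\<dots> = 3 * real r2 - 2 * real r2"
    using u BB_rowsum[of u] by (simp add: sum_subtractf)
  finally show ?thesis by simp
qed

lemma Cm_sym: "u < n2 \<Longrightarrow> k < n2 \<Longrightarrow> Cm $$ (u,k) = Cm $$ (k,u)"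
  by (simp add: Cm_entry BB_sym)

lemma Ci_rowsum: assumes u: "u < n2" shows "(\<Sum>w\<in>V2. c u w) = 1 / real r2"
proof -
  have "1 = (\<Sum>l\<in>V2. (Ci * Cm) $$ (u,l))" using Ci_props(2) u
    by (simp add: sum.delta)
  also have "\<dots> = (\<Sum>l\<in>V2. \<Sum>w\<in>V2. c u w * Cm $$ (w,l))"
    using u Ci_props(3) Cm_carrier by (intro sum.cong) (auto simp: scalar_prod_def)
  also have "\<dots> = (\<Sum>w\<in>V2. c u w * (\<Sum>l\<in>V2. Cm $$ (w,l)))"
    by (subst sum.swap) (simp add: sum_distrib_left)
  also have "\<dots> = (\<Sum>w\<in>V2. c u w) * real r2"
    by (simp add: Cm_rowsum sum_distrib_right)
  finally show ?thesis using r1 by (simp add: field_simps)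
qed

lemma Ci_colsum: assumes v: "v < n2" shows "(\<Sum>w\<in>V2. c w v) = 1 / real r2"
proof -
  have "1 = (\<Sum>l\<in>V2. (Cm * Ci) $$ (l,v))" using Ci_props(1) v
    by (simp add: sum.delta')
  also have "\<dots> = (\<Sum>l\<in>V2. \<Sum>w\<in>V2. Cm $$ (l,w) * c w v)"
    using v Ci_props(3) Cm_carrier by (intro sum.cong) (auto simp: scalar_prod_def)
  also have "\<dots> = (\<Sum>w\<in>V2. (\<Sum>l\<in>V2. Cm $$ (w,l)) * c w v)"
    by (subst sum.swap) (auto simp: sum_distrib_right Cm_sym intro!: sum.cong)
  also have "\<dots> = (\<Sum>w\<in>V2. c w v) * real r2"
    by (simp add: Cm_rowsum sum_distrib_right sum_distrib_left mult.commute)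
  finally show ?thesis using r1 by (simp add: field_simps)
qed

lemma trace_Ci:
  assumes eig: "char_poly (lap_matrix n2 E2) = (\<Prod>i<n2. [:- \<mu> i, 1:])"
  shows "mat_trace Ci = (\<Sum>i<n2. 1 / (\<mu> i + real r2))"
proof -
  have L: "lap_matrix n2 E2 \<in> carrier_mat n2 n2" by (simp add: lap_matrix_def)
  show ?thesis using trace_inverse_shift[OF L Ci_props(3) eig Ci_props(1)[unfolded Cm_def]] .
qed

lemma trace_CiA: "mat_trace (Ci * adj_matrix n2 E2) = (\<Sum>u\<in>V2. \<Sum>k\<in>V2. c u k * (if {k,u} \<in> E2 then 1 else 0))"
proof -
  have d: "dim_row (Ci * adj_matrix n2 E2) = n2" using Ci_props(3) by simp
  have "mat_trace (Ci * adj_matrix n2 E2) = (\<Sum>u\<in>V2. (Ci * adj_matrix n2 E2) $$ (u,u))"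
    unfolding mat_trace_def d by (simp add: atLeast0LessThan)
  also have "\<dots> = (\<Sum>u\<in>V2. \<Sum>k\<in>V2. c u k * (if {k,u} \<in> E2 then 1 else 0))"
  proof (rule sum.cong[OF refl])
    fix u assume u: "u \<in> V2"
    have "(Ci * adj_matrix n2 E2) $$ (u,u) = row Ci u \<bullet> col (adj_matrix n2 E2) u"
      using u Ci_props(3) by (simp add: adj_matrix_def)
    also have "\<dots> = (\<Sum>k\<in>V2. c u k * (if {k,u} \<in> E2 then 1 else 0))"
      using u Ci_props(3) unfolding scalar_prod_def by (intro sum.cong) (auto simp: adj_matrix_def)
    finally show "(Ci * adj_matrix n2 E2) $$ (u,u) = (\<Sum>k\<in>V2. c u k * (if {k,u} \<in> E2 then 1 else 0))" .
  qed
  finally show ?thesis .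
qed

end

context reg2 begin

fun Mz :: "(nat + nat set) \<Rightarrow> (nat + nat set) \<Rightarrow> real" where
  "Mz (Inl u) (Inl v) = 3 * c u v"
| "Mz (Inl u) (Inr f) = (\<Sum>w\<in>f. c u w)"
| "Mz (Inr e) (Inl v) = (\<Sum>w\<in>e. c w v)"
| "Mz (Inr e) (Inr f) = (if e = f then 1/3 else 0) + (\<Sum>w\<in>e. \<Sum>w'\<in>f. c w w') / 3"

definition Mo :: "(nat + nat set) option \<Rightarrow> (nat + nat set) option \<Rightarrow> real" where
  "Mo a b = (case a of None \<Rightarrow> 0 | Some z \<Rightarrow> (case b of None \<Rightarrow> 0 | Some x \<Rightarrow> Mz z x))"

lemma Mo_simps[simp]: "Mo None b = 0" "Mo a None = 0" "Mo (Some z) (Some x) = Mz z x"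
  by (auto simp: Mo_def split: option.splits)

definition "Zs = Inl ` V2 \<union> Inr ` E2"
definition "Os = insert None (Some ` Zs)"

lemma sum_Zs: "(\<Sum>z\<in>Zs. F z) = (\<Sum>v\<in>V2. F (Inl v)) + (\<Sum>e\<in>E2. F (Inr e))"
proof -
  have "(\<Sum>z\<in>Inl ` V2 \<union> Inr ` E2. F z) = (\<Sum>z\<in>Inl ` V2. F z) + (\<Sum>z\<in>Inr ` E2. F z)"
    by (rule sum.union_disjoint) (use finE2 in auto)
  also have "(\<Sum>z\<in>Inl ` V2. F z) = (\<Sum>v\<in>V2. F (Inl v))"
    by (rule sum.reindex_cong[of Inl]) (auto simp: inj_on_def)
  also have "(\<Sum>z\<in>Inr ` E2. F z) = (\<Sum>e\<in>E2. F (Inr e))"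
    by (rule sum.reindex_cong[of Inr]) (auto simp: inj_on_def)
  finally show ?thesis unfolding Zs_def .
qed

lemma sum_Os: "(\<Sum>a\<in>Os. F a) = F None + (\<Sum>z\<in>Zs. F (Some z))"
proof -
  have fz: "finite Zs" unfolding Zs_def using finE2 by auto
  have "(\<Sum>a\<in>Some ` Zs. F a) = (\<Sum>z\<in>Zs. F (Some z))"
    by (rule sum.reindex_cong[of Some]) (auto simp: inj_on_def)
  then show ?thesis unfolding Os_def using fz by simp
qed

lemma finite_Zs: "finite Zs" unfolding Zs_def using finE2 by auto
lemma finite_Os: "finite Os" unfolding Os_def using finite_Zs by auto

lemma swap_inc: "(\<Sum>e\<in>E2. \<Sum>w\<in>e. h e w) = (\<Sum>w\<in>V2. \<Sum>e\<in>{e\<in>E2. w\<in>e}. h e w)"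
proof -
  have "(\<Sum>e\<in>E2. \<Sum>w\<in>e. h e w) = (\<Sum>e\<in>E2. \<Sum>w\<in>V2. if w \<in> e then h e w else 0)"
  proof (rule sum.cong[OF refl])
    fix e assume "e \<in> E2"
    hence eV: "e \<subseteq> V2" using edge2 by auto
    have "(\<Sum>w\<in>V2. if w \<in> e then h e w else 0) = (\<Sum>w\<in>{w\<in>V2. w\<in>e}. h e w)"
      by (rule sym, rule sum.inter_filter) simp
    also have "{w\<in>V2. w\<in>e} = e" using eV by auto
    finally show "(\<Sum>w\<in>e. h e w) = (\<Sum>w\<in>V2. if w \<in> e then h e w else 0)" by simp
  qed
  also have "\<dots> = (\<Sum>w\<in>V2. \<Sum>e\<in>E2. if w \<in> e then h e w else 0)" by (rule sum.swap)
  also have "\<dots> = (\<Sum>w\<in>V2. \<Sum>e\<in>{e\<in>E2. w\<in>e}. h e w)"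
    by (rule sum.cong[OF refl], rule sym, rule sum.inter_filter) (use finE2 in auto)
  finally show ?thesis .
qed

lemma sum_eq_f: "f \<in> E2 \<Longrightarrow> (\<Sum>e\<in>{e\<in>E2. v\<in>e}. (if e = f then a else 0)) = (if v \<in> f then a else (0::real))"
  using finE2 by (simp add: sum.delta')

lemma BB_c_sum: assumes v: "v \<in> V2" and f: "f \<in> E2"
  shows "(\<Sum>w\<in>V2. BB v w * (\<Sum>w'\<in>f. c w w')) = 3 * real r2 * (\<Sum>w'\<in>f. c v w') - (if v \<in> f then 1 else 0)"
proof -
  have fV: "f \<subseteq> V2" "finite f" using edge2[OF f] by auto
  have "(\<Sum>w\<in>V2. BB v w * (\<Sum>w'\<in>f. c w w')) = (\<Sum>w'\<in>f. \<Sum>w\<in>V2. BB v w * c w w')"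
    by (simp add: sum_distrib_left sum.swap[of _ V2])
  also have "\<dots> = (\<Sum>w'\<in>f. 3 * real r2 * c v w' - (if v = w' then 1 else 0))"
  proof (rule sum.cong[OF refl])
    fix w' assume "w' \<in> f"
    then have "w' < n2" using fV by auto
    then show "(\<Sum>w\<in>V2. BB v w * c w w') = 3 * real r2 * c v w' - (if v = w' then 1 else 0)"
      by (intro KI) (use v in auto)
  qed
  also have "\<dots> = 3 * real r2 * (\<Sum>w'\<in>f. c v w') - (if v \<in> f then 1 else 0)"
    using fV by (simp add: sum_subtractf sum_distrib_left sum.delta)
  finally show ?thesis .
qed

lemma G_v:
  assumes v: "v \<in> V2" and x: "x \<in> Os"
  shows "(\<Sum>e\<in>{e\<in>E2. v\<in>e}. Mo (Some (Inl v)) x - Mo (Some (Inr e)) x) = (if x = Some (Inl v) then 1 else 0)"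
proof -
  have cardv: "card {e\<in>E2. v\<in>e} = r2" by (rule inc_deg[OF v])
  have finv: "finite {e\<in>E2. v\<in>e}" using finE2 by auto
  consider "x = None" | v' where "x = Some (Inl v')" "v' \<in> V2" | f where "x = Some (Inr f)" "f \<in> E2"
    using x unfolding Os_def Zs_def by auto
  then show ?thesis
  proof cases
    case 1 then show ?thesis by simp
  next
    case 2
    have "(\<Sum>e\<in>{e\<in>E2. v\<in>e}. Mo (Some (Inl v)) x - Mo (Some (Inr e)) x)
        = (\<Sum>e\<in>{e\<in>E2. v\<in>e}. 3 * c v v') - (\<Sum>e\<in>{e\<in>E2. v\<in>e}. \<Sum>w\<in>e. c w v')"
      using 2 by (simp add: sum_subtractf)
    also have "\<dots> = real r2 * (3 * c v v') - (\<Sum>w\<in>V2. BB v w * c w v')"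
      using cardv sum_inc[OF v, of "\<lambda>w. c w v'"] by simp
    also have "\<dots> = (if v = v' then 1 else 0)" using KI[of v v'] v 2 by simp
    finally show ?thesis using 2 by simp
  next
    case 3
    have "(\<Sum>e\<in>{e\<in>E2. v\<in>e}. Mo (Some (Inl v)) x - Mo (Some (Inr e)) x)
        = (\<Sum>e\<in>{e\<in>E2. v\<in>e}. (\<Sum>w\<in>f. c v w)) - (\<Sum>e\<in>{e\<in>E2. v\<in>e}. (if e = f then 1/3 else 0))
          - (\<Sum>e\<in>{e\<in>E2. v\<in>e}. \<Sum>w\<in>e. (\<Sum>w'\<in>f. c w w')) / 3"
      using 3 by (simp add: sum_subtractf sum.distrib sum_divide_distrib[symmetric] sum_distrib_left diff_divide_distrib add_divide_distrib algebra_simps)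
    also have "\<dots> = real r2 * (\<Sum>w\<in>f. c v w) - (if v \<in> f then 1/3 else 0)
          - (3 * real r2 * (\<Sum>w'\<in>f. c v w') - (if v \<in> f then 1 else 0)) / 3"
      using cardv sum_eq_f[OF 3(2), where v=v and a="1/3"] sum_inc[OF v, of "\<lambda>w. \<Sum>w'\<in>f. c w w'"] BB_c_sum[OF v 3(2)]
      by simp
    also have "\<dots> = 0" by simp
    finally show ?thesis using 3 by simp
  qed
qed

lemma G_e:
  assumes e: "e \<in> E2" and x: "x \<in> Os"
  shows "(\<Sum>w\<in>e. Mo (Some (Inr e)) x - Mo (Some (Inl w)) x) + Mo (Some (Inr e)) x = (if x = Some (Inr e) then 1 else 0)"
proof -
  have ce: "card e = 2" "finite e" using edge2[OF e] by auto
  consider "x = None" | v' where "x = Some (Inl v')" "v' \<in> V2" | f where "x = Some (Inr f)" "f \<in> E2"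
    using x unfolding Os_def Zs_def by auto
  then show ?thesis
  proof cases
    case 1 then show ?thesis by simp
  next
    case 2
    define S where "S = (\<Sum>w\<in>e. c w v')"
    have "(\<Sum>w\<in>e. Mo (Some (Inr e)) x - Mo (Some (Inl w)) x) = (\<Sum>w\<in>e. S - 3 * c w v')"
      using 2 unfolding S_def by simp
    also have "\<dots> = real (card e) * S - 3 * S" unfolding S_def by (simp add: sum_subtractf sum_distrib_left)
    finally show ?thesis using ce 2 unfolding S_def by simp
  next
    case 3
    define M where "M = Mz (Inr e) (Inr f)"
    define Q where "Q = (\<Sum>w\<in>e. \<Sum>w'\<in>f. c w w')"
    have "(\<Sum>w\<in>e. Mo (Some (Inr e)) x - Mo (Some (Inl w)) x) = (\<Sum>w\<in>e. M - (\<Sum>w'\<in>f. c w w'))"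
      using 3 unfolding M_def by simp
    also have "\<dots> = real (card e) * M - Q" unfolding Q_def by (simp add: sum_subtractf)
    finally have "(\<Sum>w\<in>e. Mo (Some (Inr e)) x - Mo (Some (Inl w)) x) + Mo (Some (Inr e)) x = 3 * M - Q"
      using ce 3 unfolding M_def by simp
    also have "3 * M - Q = (if e = f then 1 else 0)" unfolding M_def Q_def by simp
    finally show ?thesis using 3 by simp
  qed
qed

lemma G_r:
  assumes x: "x \<in> Os"
  shows "(\<Sum>e\<in>E2. Mo (Some (Inr e)) x) = (if x = None then 0 else 1)"
proof -
  have rpos: "real r2 > 0" using r1 by simp
  consider "x = None" | v' where "x = Some (Inl v')" "v' \<in> V2" | f where "x = Some (Inr f)" "f \<in> E2"
    using x unfolding Os_def Zs_def by auto
  then show ?thesis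
  proof cases
    case 1 then show ?thesis by simp
  next
    case 2
    have "(\<Sum>e\<in>E2. Mo (Some (Inr e)) x) = (\<Sum>e\<in>E2. \<Sum>w\<in>e. c w v')" using 2 by simp
    also have "\<dots> = real r2 * (1 / real r2)" using sum_all[of "\<lambda>w. c w v'"] Ci_colsum[of v'] 2 by simp
    finally show ?thesis using 2 rpos by simp
  next
    case 3
    have fV: "f \<subseteq> V2" "finite f" "card f = 2" using edge2[OF 3(2)] by auto
    have "(\<Sum>e\<in>E2. Mo (Some (Inr e)) x) = (\<Sum>e\<in>E2. if e = f then 1/3 else 0) + (\<Sum>e\<in>E2. \<Sum>w\<in>e. (\<Sum>w'\<in>f. c w w')) / 3"
      using 3 by (simp add: sum.distrib sum_divide_distrib)
    also have "(\<Sum>e\<in>E2. \<Sum>w\<in>e. (\<Sum>w'\<in>f. c w w')) = real r2 * (\<Sum>w\<in>V2. \<Sum>w'\<in>f. c w w')"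
      by (rule sum_all)
    also have "(\<Sum>w\<in>V2. \<Sum>w'\<in>f. c w w') = (\<Sum>w'\<in>f. \<Sum>w\<in>V2. c w w')" by (rule sum.swap)
    also have "\<dots> = (\<Sum>w'\<in>f. 1 / real r2)" by (rule sum.cong) (use fV Ci_colsum in auto)
    finally show ?thesis using 3 fV finE2 rpos by (simp add: sum.delta')
  qed
qed

lemma trace_Ci_sum: "mat_trace Ci = (\<Sum>v\<in>V2. c v v)"
  unfolding mat_trace_def using Ci_props(3) by (simp add: atLeast0LessThan)

lemma T_val: "(\<Sum>a\<in>Os. Mo a a) = 3 * mat_trace Ci + real (card E2) / 3
    + (real r2 * mat_trace Ci + mat_trace (Ci * adj_matrix n2 E2)) / 3"
proof -
  have "(\<Sum>a\<in>Os. Mo a a) = (\<Sum>v\<in>V2. 3 * c v v) + (\<Sum>e\<in>E2. 1/3 + (\<Sum>w\<in>e. \<Sum>w'\<in>e. c w w') / 3)"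
    by (simp add: sum_Os sum_Zs)
  also have "(\<Sum>e\<in>E2. 1/3 + (\<Sum>w\<in>e. \<Sum>w'\<in>e. c w w') / 3)
      = real (card E2) / 3 + (\<Sum>e\<in>E2. \<Sum>w\<in>e. \<Sum>w'\<in>e. c w w') / 3"
    by (simp add: sum.distrib sum_divide_distrib)
  also have "(\<Sum>e\<in>E2. \<Sum>w\<in>e. \<Sum>w'\<in>e. c w w') = (\<Sum>w\<in>V2. \<Sum>e\<in>{e\<in>E2. w\<in>e}. \<Sum>w'\<in>e. c w w')"
    by (rule swap_inc)
  also have "\<dots> = (\<Sum>w\<in>V2. \<Sum>w'\<in>V2. BB w w' * c w w')"
    by (rule sum.cong[OF refl]) (rule sum_inc)
  also have "\<dots> = (\<Sum>w\<in>V2. real r2 * c w w + (\<Sum>w'\<in>V2. c w w' * (if {w',w} \<in> E2 then 1 else 0)))"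
  proof (rule sum.cong[OF refl])
    fix w assume w: "w \<in> V2"
    have "(\<Sum>w'\<in>V2. BB w w' * c w w') = (\<Sum>w'\<in>V2. (if w = w' then real r2 else 0) * c w w')
        + (\<Sum>w'\<in>V2. c w w' * (if {w',w} \<in> E2 then 1 else 0))"
      by (simp add: BB_def sum.distrib algebra_simps insert_commute)
    also have "(\<Sum>w'\<in>V2. (if w = w' then real r2 else 0) * c w w') = real r2 * c w w"
      using w by (simp add: sum_if_mult)
    finally show "(\<Sum>w'\<in>V2. BB w w' * c w w') = real r2 * c w w + (\<Sum>w'\<in>V2. c w w' * (if {w',w} \<in> E2 then 1 else 0))" .
  qed
  also have "\<dots> = real r2 * mat_trace Ci + mat_trace (Ci * adj_matrix n2 E2)"
    by (simp add: trace_CiA trace_Ci_sum sum.distrib sum_distrib_left)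
  finally show ?thesis by (simp add: trace_Ci_sum sum_distrib_left)
qed

lemma SM_val: "(\<Sum>a\<in>Os. \<Sum>b\<in>Os. Mo a b) = 3 * real n2 / real r2 + 2 * real n2 + real (card E2) / 3 + real r2 * real n2 / 3"
proof -
  have rpos: "real r2 > 0" using r1 by simp
  have rs: "\<And>u. u \<in> V2 \<Longrightarrow> (\<Sum>w\<in>V2. c u w) = 1 / real r2" using Ci_rowsum by auto
  have cs: "\<And>u. u \<in> V2 \<Longrightarrow> (\<Sum>w\<in>V2. c w u) = 1 / real r2" using Ci_colsum by auto
  have "(\<Sum>a\<in>Os. \<Sum>b\<in>Os. Mo a b) = (\<Sum>z\<in>Zs. \<Sum>x\<in>Zs. Mz z x)"
    by (simp add: sum_Os)
  also have "\<dots> = (\<Sum>v\<in>V2. \<Sum>v'\<in>V2. 3 * c v v') + (\<Sum>v\<in>V2. \<Sum>f\<in>E2. \<Sum>w\<in>f. c v w)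
      + ((\<Sum>e\<in>E2. \<Sum>v\<in>V2. \<Sum>w\<in>e. c w v) + (\<Sum>e\<in>E2. \<Sum>f\<in>E2. (if e = f then 1/3 else 0) + (\<Sum>w\<in>e. \<Sum>w'\<in>f. c w w') / 3))"
    by (simp add: sum_Zs sum.distrib)
  also have "(\<Sum>v\<in>V2. \<Sum>v'\<in>V2. 3 * c v v') = 3 * real n2 / real r2"
    by (simp add: sum_distrib_left[symmetric] rs)
  also have "(\<Sum>v\<in>V2. \<Sum>f\<in>E2. \<Sum>w\<in>f. c v w) = real n2"
    using rpos by (simp add: sum_all rs)
  also have "(\<Sum>e\<in>E2. \<Sum>v\<in>V2. \<Sum>w\<in>e. c w v) = (\<Sum>e\<in>E2. \<Sum>w\<in>e. \<Sum>v\<in>V2. c w v)"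
    by (rule sum.cong[OF refl]) (rule sum.swap)
  also have "\<dots> = real r2 * (\<Sum>w\<in>V2. \<Sum>v\<in>V2. c w v)" by (rule sum_all)
  also have "(\<Sum>w\<in>V2. \<Sum>v\<in>V2. c w v) = (\<Sum>w\<in>V2. 1 / real r2)"
    by (rule sum.cong[OF refl]) (simp add: rs)
  also have "real r2 * (\<Sum>w\<in>V2. 1 / real r2) = real n2" using rpos by simp
  also have "(\<Sum>e\<in>E2. \<Sum>f\<in>E2. (if e = f then 1/3 else 0) + (\<Sum>w\<in>e. \<Sum>w'\<in>f. c w w') / 3)
      = real (card E2) / 3 + (\<Sum>e\<in>E2. \<Sum>w\<in>e. \<Sum>f\<in>E2. \<Sum>w'\<in>f. c w w') / 3"
  proof -
    have "(\<Sum>e\<in>E2. \<Sum>f\<in>E2. (if e = f then 1/3 else 0) + (\<Sum>w\<in>e. \<Sum>w'\<in>f. c w w') / 3)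
        = (\<Sum>e\<in>E2. 1/3 + (\<Sum>w\<in>e. \<Sum>f\<in>E2. \<Sum>w'\<in>f. c w w') / 3)"
    proof (rule sum.cong[OF refl])
      fix e assume e: "e \<in> E2"
      have "(\<Sum>f\<in>E2. (if e = f then 1/3 else 0) + (\<Sum>w\<in>e. \<Sum>w'\<in>f. c w w') / 3)
          = 1/3 + (\<Sum>f\<in>E2. \<Sum>w\<in>e. \<Sum>w'\<in>f. c w w') / 3"
        using e finE2 by (simp add: sum.distrib sum_divide_distrib)
      also have "(\<Sum>f\<in>E2. \<Sum>w\<in>e. \<Sum>w'\<in>f. c w w') = (\<Sum>w\<in>e. \<Sum>f\<in>E2. \<Sum>w'\<in>f. c w w')"
        by (rule sum.swap)
      finally show "(\<Sum>f\<in>E2. (if e = f then 1/3 else 0) + (\<Sum>w\<in>e. \<Sum>w'\<in>f. c w w') / 3)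
          = 1/3 + (\<Sum>w\<in>e. \<Sum>f\<in>E2. \<Sum>w'\<in>f. c w w') / 3" .
    qed
    then show ?thesis by (simp add: sum.distrib sum_divide_distrib)
  qed
  also have "(\<Sum>e\<in>E2. \<Sum>w\<in>e. \<Sum>f\<in>E2. \<Sum>w'\<in>f. c w w') = real r2 * real n2"
  proof -
    have "(\<Sum>e\<in>E2. \<Sum>w\<in>e. \<Sum>f\<in>E2. \<Sum>w'\<in>f. c w w') = real r2 * (\<Sum>w\<in>V2. \<Sum>f\<in>E2. \<Sum>w'\<in>f. c w w')"
      by (rule sum_all)
    also have "(\<Sum>w\<in>V2. \<Sum>f\<in>E2. \<Sum>w'\<in>f. c w w') = (\<Sum>w\<in>V2. real r2 * (1 / real r2))"
      by (rule sum.cong[OF refl]) (simp add: sum_all rs)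
    finally show ?thesis using rpos by simp
  qed
  finally show ?thesis by simp
qed

end

locale corona = reg2 n2 r2 E2 for n2 r2 :: nat and E2 :: "nat set set" +
  fixes V1 :: "'a set" and E1 :: "'a set set"
  assumes simp1: "simple_graph V1 E1" and conn1: "connected_graph V1 E1"
begin

abbreviation "VH \<equiv> corona_edge_V V1 V2 E2"
abbreviation "EH \<equiv> corona_edge_E V1 E1 V2 E2"

fun node :: "'a \<Rightarrow> (nat + nat set) option \<Rightarrow> 'a + ('a \<times> (nat + nat set))" where
  "node i None = Inl i"
| "node i (Some z) = Inr (i, z)"

lemma VH_Inl[simp]: "Inl a \<in> VH \<longleftrightarrow> a \<in> V1"
  by (auto simp: corona_edge_V_def)
lemma VH_Inr_Inl[simp]: "Inr (i, Inl v) \<in> VH \<longleftrightarrow> i \<in> V1 \<and> v \<in> V2"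
  by (auto simp: corona_edge_V_def)
lemma VH_Inr_Inr[simp]: "Inr (i, Inr e) \<in> VH \<longleftrightarrow> i \<in> V1 \<and> e \<in> E2"
  by (auto simp: corona_edge_V_def)

lemma VH_node: "VH = (\<lambda>(i,a). node i a) ` (V1 \<times> Os)"
proof (rule Set.set_eqI)
  fix x
  show "x \<in> VH \<longleftrightarrow> x \<in> (\<lambda>(i,a). node i a) ` (V1 \<times> Os)"
  proof (cases x)
    case (Inl a)
    then show ?thesis by (auto simp: Os_def intro!: image_eqI[of _ _ "(a, None)"])
  next
    case (Inr p)
    obtain i z where p: "p = (i,z)" by (cases p)
    show ?thesis
    proof (cases z)
      case (Inl v)
      show ?thesis
      proof
        assume "x \<in> VH" then show "x \<in> (\<lambda>(i,a). node i a) ` (V1 \<times> Os)"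
          using Inr p Inl by (auto simp: Os_def Zs_def intro!: image_eqI[of _ _ "(i, Some z)"])
      next
        assume "x \<in> (\<lambda>(i,a). node i a) ` (V1 \<times> Os)"
        then obtain j a where "j \<in> V1" "a \<in> Os" "x = node j a" by auto
        then show "x \<in> VH" using Inr p Inl by (cases a) (auto simp: Os_def Zs_def)
      qed
    next
      case (Inr e)
      show ?thesis
      proof
        assume "x \<in> VH" then show "x \<in> (\<lambda>(i,a). node i a) ` (V1 \<times> Os)"
          using \<open>x = Inr p\<close> p Inr by (auto simp: Os_def Zs_def intro!: image_eqI[of _ _ "(i, Some z)"])
      next
        assume "x \<in> (\<lambda>(i,a). node i a) ` (V1 \<times> Os)"
        then obtain j a where "j \<in> V1" "a \<in> Os" "x = node j a" by auto
        then show "x \<in> VH" using \<open>x = Inr p\<close> p Inr by (cases a) (auto simp: Os_def Zs_def)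
      qed
    qed
  qed
qed

lemma node_inj: "inj_on (\<lambda>(i,a). node i a) (V1 \<times> Os)"
proof (rule inj_onI, clarify)
  fix i a j b assume "node i a = node j b"
  then show "i = j \<and> a = b" by (cases a; cases b) auto
qed

lemma EH_Inl_Inl[simp]: "{Inl a, Inl b} \<in> EH \<longleftrightarrow> {a,b} \<in> E1"
  by (auto simp: corona_edge_E_def doubleton_eq_iff insert_commute)

lemma EH_Inl_Inr[simp]: "{Inl a, Inr (i, z)} \<in> EH \<longleftrightarrow> i = a \<and> a \<in> V1 \<and> (\<exists>e. z = Inr e \<and> e \<in> E2)"
  by (auto simp: corona_edge_E_def doubleton_eq_iff)

lemma EH_Inr_Inl[simp]: "{Inr (i, z), Inl a} \<in> EH \<longleftrightarrow> i = a \<and> a \<in> V1 \<and> (\<exists>e. z = Inr e \<and> e \<in> E2)"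
  using EH_Inl_Inr by (simp add: insert_commute)

lemma EH_Inr_Inr[simp]: "{Inr (i, z), Inr (j, z')} \<in> EH \<longleftrightarrow> i = j \<and> i \<in> V1 \<and>
    ((\<exists>v e. z = Inl v \<and> z' = Inr e \<and> e \<in> E2 \<and> v \<in> e) \<or> (\<exists>v e. z = Inr e \<and> z' = Inl v \<and> e \<in> E2 \<and> v \<in> e))"
  by (auto simp: corona_edge_E_def doubleton_eq_iff)

lemma vcases: obtains (L) a where "u = Inl a" | (V) i v where "u = Inr (i, Inl v)" | (E) i e where "u = Inr (i, Inr e)"
  by (metis sumE surj_pair)

lemma finite_VH: "finite VH"
  unfolding VH_node using simple_finite[OF simp1] finite_Os by auto

lemma simpleH: "simple_graph VH EH"
  unfolding simple_graph_def
proof (intro conjI finite_VH subsetI)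
  fix x assume "x \<in> EH"
  then consider (a) a b where "x = {Inl a, Inl b}" "{a,b} \<in> E1"
    | (b) i v e where "x = {Inr (i, Inl v), Inr (i, Inr e)}" "i \<in> V1" "e \<in> E2" "v \<in> e"
    | (c) i e where "x = {Inl i, Inr (i, Inr e)}" "i \<in> V1" "e \<in> E2"
    unfolding corona_edge_E_def by blast
  then show "x \<in> {{u, v} |u v. u \<in> VH \<and> v \<in> VH \<and> u \<noteq> v}"
  proof cases
    case a
    have "a \<in> V1" "b \<in> V1" using simple_mem[OF simp1 a(2)] by auto
    moreover have "a \<noteq> b" using a(2) simple_noloop[OF simp1, of a] by auto
    ultimately have "Inl a \<in> VH" "Inl b \<in> VH" "Inl a \<noteq> (Inl b :: 'a + ('a \<times> (nat + nat set)))" by auto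
    then show ?thesis unfolding a(1)
      by (intro CollectI exI[of _ "Inl a"] exI[of _ "Inl b"]) simp
  next
    case b
    have "v \<in> V2" using edge2(1)[OF b(3)] b(4) by auto
    then have "Inr (i, Inl v) \<in> VH" "Inr (i, Inr e) \<in> VH" "Inr (i, Inl v) \<noteq> (Inr (i, Inr e) :: 'a + ('a \<times> (nat + nat set)))"
      using b by auto
    then show ?thesis unfolding b(1)
      by (intro CollectI exI[of _ "Inr (i, Inl v)"] exI[of _ "Inr (i, Inr e)"]) simp
  next
    case c
    then have "Inl i \<in> VH" "Inr (i, Inr e) \<in> VH" by auto
    then show ?thesis unfolding c(1)
      by (intro CollectI exI[of _ "Inl i"] exI[of _ "Inr (i, Inr e)"]) simp
  qed
qed

lemma nbr_Inl: assumes k: "k \<in> V1"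
  shows "nbr VH EH (Inl k) = Inl ` nbr V1 E1 k \<union> (\<lambda>e. Inr (k, Inr e)) ` E2"
proof (rule Set.set_eqI)
  fix u show "u \<in> nbr VH EH (Inl k) \<longleftrightarrow> u \<in> Inl ` nbr V1 E1 k \<union> (\<lambda>e. Inr (k, Inr e)) ` E2"
    by (cases u rule: vcases) (use k in \<open>auto simp: nbr_def\<close>)
qed

lemma nbr_V: assumes k: "k \<in> V1" and v: "v \<in> V2"
  shows "nbr VH EH (Inr (k, Inl v)) = (\<lambda>e. Inr (k, Inr e)) ` {e\<in>E2. v\<in>e}"
proof (rule Set.set_eqI)
  fix u show "u \<in> nbr VH EH (Inr (k, Inl v)) \<longleftrightarrow> u \<in> (\<lambda>e. Inr (k, Inr e)) ` {e\<in>E2. v\<in>e}"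
    by (cases u rule: vcases) (use k v in \<open>auto simp: nbr_def\<close>)
qed

lemma nbr_E: assumes k: "k \<in> V1" and e: "e \<in> E2"
  shows "nbr VH EH (Inr (k, Inr e)) = insert (Inl k) ((\<lambda>w. Inr (k, Inl w)) ` e)"
proof (rule Set.set_eqI)
  have eV: "e \<subseteq> V2" using edge2[OF e] by auto
  fix u show "u \<in> nbr VH EH (Inr (k, Inr e)) \<longleftrightarrow> u \<in> insert (Inl k) ((\<lambda>w. Inr (k, Inl w)) ` e)"
    by (cases u rule: vcases) (use k e eV in \<open>auto simp: nbr_def\<close>)
qed

lemma lapv_Inl: assumes k: "k \<in> V1"
  shows "lapv VH EH P (Inl k) = (\<Sum>b\<in>nbr V1 E1 k. P (Inl k) - P (Inl b)) + (\<Sum>e\<in>E2. P (Inl k) - P (Inr (k, Inr e)))"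
proof -
  have "lapv VH EH P (Inl k) = (\<Sum>u\<in>Inl ` nbr V1 E1 k \<union> (\<lambda>e. Inr (k, Inr e)) ` E2. P (Inl k) - P u)"
    using lapv_nbr[OF simpleH, of "Inl k" P] k nbr_Inl[OF k] by simp
  also have "\<dots> = (\<Sum>u\<in>Inl ` nbr V1 E1 k. P (Inl k) - P u) + (\<Sum>u\<in>(\<lambda>e. Inr (k, Inr e)) ` E2. P (Inl k) - P u)"
    by (rule sum.union_disjoint) (use nbr_finite[OF simp1] finE2 in auto)
  also have "(\<Sum>u\<in>Inl ` nbr V1 E1 k. P (Inl k) - P u) = (\<Sum>b\<in>nbr V1 E1 k. P (Inl k) - P (Inl b))"
    by (rule sum.reindex_cong[of Inl]) (auto simp: inj_on_def)
  also have "(\<Sum>u\<in>(\<lambda>e. Inr (k, Inr e)) ` E2. P (Inl k) - P u) = (\<Sum>e\<in>E2. P (Inl k) - P (Inr (k, Inr e)))"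
    by (rule sum.reindex_cong[of "\<lambda>e. Inr (k, Inr e)"]) (auto simp: inj_on_def)
  finally show ?thesis .
qed

lemma lapv_V: assumes k: "k \<in> V1" and v: "v \<in> V2"
  shows "lapv VH EH P (Inr (k, Inl v)) = (\<Sum>e\<in>{e\<in>E2. v\<in>e}. P (Inr (k, Inl v)) - P (Inr (k, Inr e)))"
proof -
  have "lapv VH EH P (Inr (k, Inl v)) = (\<Sum>u\<in>(\<lambda>e. Inr (k, Inr e)) ` {e\<in>E2. v\<in>e}. P (Inr (k, Inl v)) - P u)"
    using lapv_nbr[OF simpleH, of "Inr (k, Inl v)" P] k v nbr_V[OF k v] by simp
  also have "\<dots> = (\<Sum>e\<in>{e\<in>E2. v\<in>e}. P (Inr (k, Inl v)) - P (Inr (k, Inr e)))"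
    by (rule sum.reindex_cong[of "\<lambda>e. Inr (k, Inr e)"]) (auto simp: inj_on_def)
  finally show ?thesis .
qed

lemma lapv_E: assumes k: "k \<in> V1" and e: "e \<in> E2"
  shows "lapv VH EH P (Inr (k, Inr e)) = (\<Sum>w\<in>e. P (Inr (k, Inr e)) - P (Inr (k, Inl w))) + (P (Inr (k, Inr e)) - P (Inl k))"
proof -
  have fe: "finite e" using edge2[OF e] by auto
  have "lapv VH EH P (Inr (k, Inr e)) = (\<Sum>u\<in>insert (Inl k) ((\<lambda>w. Inr (k, Inl w)) ` e). P (Inr (k, Inr e)) - P u)"
    using lapv_nbr[OF simpleH, of "Inr (k, Inr e)" P] k e nbr_E[OF k e] by simp
  also have "\<dots> = (P (Inr (k, Inr e)) - P (Inl k)) + (\<Sum>u\<in>(\<lambda>w. Inr (k, Inl w)) ` e. P (Inr (k, Inr e)) - P u)"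
    using fe by (subst sum.insert) auto
  also have "(\<Sum>u\<in>(\<lambda>w. Inr (k, Inl w)) ` e. P (Inr (k, Inr e)) - P u) = (\<Sum>w\<in>e. P (Inr (k, Inr e)) - P (Inr (k, Inl w)))"
    by (rule sum.reindex_cong[of "\<lambda>w. Inr (k, Inl w)"]) (auto simp: inj_on_def)
  finally show ?thesis by simp
qed

lemma connH: "connected_graph VH EH"
  unfolding connected_graph_def
proof (intro conjI ballI)
  obtain a where "a \<in> V1" using conn1 unfolding connected_graph_def by auto
  then have "Inl a \<in> VH" by simp
  then show "VH \<noteq> {}" by (metis empty_iff)
next
  let ?R = "\<lambda>x y. {x, y} \<in> EH"
  have base: "?R\<^sup>*\<^sup>* (Inl a) (Inl b)" if "a \<in> V1" "b \<in> V1" for a b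
  proof -
    have "(\<lambda>x y. {x, y} \<in> E1)\<^sup>*\<^sup>* a b" using conn1 that unfolding connected_graph_def by auto
    then show ?thesis
    proof (induction rule: rtranclp_induct)
      case base then show ?case by simp
    next
      case (step y z)
      then have "{Inl y, Inl z} \<in> EH" by simp
      then show ?case using step.IH by (rule rtranclp.rtrancl_into_rtrancl[rotated])
    qed
  qed
  have up: "?R\<^sup>*\<^sup>* (Inl i) u \<and> ?R\<^sup>*\<^sup>* u (Inl i)" if h: "u \<in> VH" "u \<noteq> Inl i" "\<exists>z. u = Inr (i, z)" for u i
  proof -
    obtain z where uz: "u = Inr (i, z)" using h(3) by blast
    show ?thesis
    proof (cases z)
      case (Inr e)
      then have ie: "i \<in> V1" "e \<in> E2" using h uz by auto
      have "?R (Inl i) u" "?R u (Inl i)" using ie uz Inr by auto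
      then show ?thesis by auto
    next
      case (Inl v)
      then have iv: "i \<in> V1" "v \<in> V2" using h uz by auto
      have "card {e\<in>E2. v\<in>e} = r2" by (rule inc_deg[OF iv(2)])
      then have "{e\<in>E2. v\<in>e} \<noteq> {}" using r1 by (metis card.empty not_one_le_zero)
      then obtain e where e: "e \<in> E2" "v \<in> e" by auto
      have r1': "?R (Inl i) (Inr (i, Inr e))" "?R (Inr (i, Inr e)) (Inl i)" using iv e by auto
      have r2': "?R (Inr (i, Inr e)) u" "?R u (Inr (i, Inr e))" using iv e uz Inl by auto
      show ?thesis using r1' r2' by (meson converse_rtranclp_into_rtranclp r_into_rtranclp)
    qed
  qed
  have toI: "\<exists>i\<in>V1. ?R\<^sup>*\<^sup>* (Inl i) u \<and> ?R\<^sup>*\<^sup>* u (Inl i)" if "u \<in> VH" for u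
  proof (cases u rule: vcases)
    case (L a) then show ?thesis using that by auto
  next
    case (V i v) then show ?thesis using that up[of u i] by auto
  next
    case (E i e) then show ?thesis using that up[of u i] by auto
  qed
  fix u w assume "u \<in> VH" "w \<in> VH"
  then obtain i j where "i \<in> V1" "?R\<^sup>*\<^sup>* u (Inl i)" "j \<in> V1" "?R\<^sup>*\<^sup>* (Inl j) w"
    using toI by blast
  then show "?R\<^sup>*\<^sup>* u w" using base[of i j] by (meson rtranclp_trans)
qed

end

lemma kf_sum:
  assumes G: "simple_graph V E" and C: "connected_graph V E"
  shows "kirchhoff V E = (\<Sum>u\<in>V. \<Sum>v\<in>V. resistance V E u v) / 2"
proof -
  have fin: "finite V" using simple_finite[OF G] .
  have "(\<Sum>p\<in>{(u, v). u \<in> V \<and> v \<in> V \<and> u \<noteq> v}. resistance V E (fst p) (snd p))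
      = (\<Sum>p\<in>V \<times> V. resistance V E (fst p) (snd p))"
    by (rule sum.mono_neutral_left) (use fin resistance_self[OF G C] in auto)
  also have "\<dots> = (\<Sum>u\<in>V. \<Sum>v\<in>V. resistance V E u v)"
    unfolding sum.cartesian_product by (simp add: case_prod_beta)
  finally show ?thesis unfolding kirchhoff_def by simp
qed

lemma quad_sum:
  fixes f :: "'i \<Rightarrow> 'i \<Rightarrow> real"
  assumes I: "finite I" and A: "finite A"
  shows "(\<Sum>i\<in>I. \<Sum>a\<in>A. \<Sum>j\<in>I. \<Sum>b\<in>A. f i j + g a + g b - (if i = j then 1 else 0) * (h a b + h b a))
    = real (card A)^2 * (\<Sum>i\<in>I. \<Sum>j\<in>I. f i j) + 2 * real (card I)^2 * real (card A) * (\<Sum>a\<in>A. g a)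
      - 2 * real (card I) * (\<Sum>a\<in>A. \<Sum>b\<in>A. h a b)"
proof -
  have inner: "(\<Sum>j\<in>I. \<Sum>b\<in>A. f i j + g a + g b - (if i = j then 1 else 0) * (h a b + h b a))
     = real (card A) * (\<Sum>j\<in>I. f i j) + real (card I) * real (card A) * g a + real (card I) * (\<Sum>b\<in>A. g b)
       - (\<Sum>b\<in>A. h a b + h b a)" if i: "i \<in> I" for i a
  proof -
    have "(\<Sum>j\<in>I. \<Sum>b\<in>A. f i j + g a + g b - (if i = j then 1 else 0) * (h a b + h b a))
       = (\<Sum>j\<in>I. real (card A) * f i j + real (card A) * g a + (\<Sum>b\<in>A. g b) - (if i = j then 1 else 0) * (\<Sum>b\<in>A. h a b + h b a))"
    proof (rule sum.cong[OF refl])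
      fix j
      show "(\<Sum>b\<in>A. f i j + g a + g b - (if i = j then 1 else 0) * (h a b + h b a))
          = real (card A) * f i j + real (card A) * g a + (\<Sum>b\<in>A. g b) - (if i = j then 1 else 0) * (\<Sum>b\<in>A. h a b + h b a)"
        by (simp only: sum.distrib sum_subtractf sum_distrib_left[symmetric] sum_constant)
    qed
    also have "\<dots> = real (card A) * (\<Sum>j\<in>I. f i j) + real (card I) * real (card A) * g a + real (card I) * (\<Sum>b\<in>A. g b)
       - (\<Sum>j\<in>I. (if i = j then 1 else 0) * (\<Sum>b\<in>A. h a b + h b a))"
      by (simp add: sum.distrib sum_subtractf sum_distrib_left)
    also have "(\<Sum>j\<in>I. (if i = j then 1 else 0) * (\<Sum>b\<in>A. h a b + h b a)) = (\<Sum>b\<in>A. h a b + h b a)"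
      using sum_if_mult[OF I i, of 1 "\<lambda>_. \<Sum>b\<in>A. h a b + h b a"] by simp
    finally show ?thesis .
  qed
  have "(\<Sum>i\<in>I. \<Sum>a\<in>A. \<Sum>j\<in>I. \<Sum>b\<in>A. f i j + g a + g b - (if i = j then 1 else 0) * (h a b + h b a))
    = (\<Sum>i\<in>I. \<Sum>a\<in>A. real (card A) * (\<Sum>j\<in>I. f i j) + real (card I) * real (card A) * g a + real (card I) * (\<Sum>b\<in>A. g b)
       - (\<Sum>b\<in>A. h a b + h b a))"
    by (rule sum.cong[OF refl], rule sum.cong[OF refl]) (rule inner)
  also have "\<dots> = real (card A)^2 * (\<Sum>i\<in>I. \<Sum>j\<in>I. f i j) + 2 * real (card I)^2 * real (card A) * (\<Sum>a\<in>A. g a)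
      - 2 * real (card I) * (\<Sum>a\<in>A. \<Sum>b\<in>A. h a b)"
  proof -
    define SM where "SM = (\<Sum>a\<in>A. \<Sum>b\<in>A. h a b)"
    define G where "G = (\<Sum>a\<in>A. g a)"
    have sw: "(\<Sum>a\<in>A. \<Sum>b\<in>A. h b a) = SM" unfolding SM_def by (rule sum.swap)
    have H: "(\<Sum>a\<in>A. \<Sum>b\<in>A. h a b + h b a) = 2 * SM"
      using sw unfolding SM_def by (simp add: sum.distrib)
    have i2: "(\<Sum>a\<in>A. real (card A) * (\<Sum>j\<in>I. f i j) + real (card I) * real (card A) * g a + real (card I) * (\<Sum>b\<in>A. g b)
       - (\<Sum>b\<in>A. h a b + h b a)) = real (card A) * real (card A) * (\<Sum>j\<in>I. f i j) + 2 * real (card I) * real (card A) * G - 2 * SM" for i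
    proof -
      have "(\<Sum>a\<in>A. real (card A) * (\<Sum>j\<in>I. f i j) + real (card I) * real (card A) * g a + real (card I) * (\<Sum>b\<in>A. g b)
       - (\<Sum>b\<in>A. h a b + h b a)) = real (card A) * (real (card A) * (\<Sum>j\<in>I. f i j)) + real (card I) * real (card A) * G
         + real (card I) * (real (card A) * G) - 2 * SM"
        unfolding G_def H[symmetric] by (simp only: sum.distrib sum_subtractf sum_distrib_left[symmetric] sum_constant)
      then show ?thesis by (simp add: algebra_simps)
    qed
    have "(\<Sum>i\<in>I. \<Sum>a\<in>A. real (card A) * (\<Sum>j\<in>I. f i j) + real (card I) * real (card A) * g a + real (card I) * (\<Sum>b\<in>A. g b)
       - (\<Sum>b\<in>A. h a b + h b a)) = (\<Sum>i\<in>I. real (card A) * real (card A) * (\<Sum>j\<in>I. f i j) + 2 * real (card I) * real (card A) * G - 2 * SM)"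
      by (rule sum.cong[OF refl]) (rule i2)
    also have "\<dots> = real (card A) * real (card A) * (\<Sum>i\<in>I. \<Sum>j\<in>I. f i j) + real (card I) * (2 * real (card I) * real (card A) * G) - real (card I) * (2 * SM)"
      by (simp only: sum.distrib sum_subtractf sum_distrib_left[symmetric] sum_constant) (simp add: algebra_simps)
    finally show ?thesis unfolding SM_def G_def by (simp add: power2_eq_square algebra_simps)
  qed
  finally show ?thesis .
qed

context corona begin

lemma res_H:
  assumes i: "i \<in> V1" and j: "j \<in> V1" and a: "a \<in> Os" and b: "b \<in> Os"
  shows "resistance VH EH (node i a) (node j b) = resistance V1 E1 i j + Mo a a + Mo b b
           - (if i = j then 1 else 0) * (Mo a b + Mo b a)"
proof -
  have "(\<Sum>w\<in>V1. (if w = i then 1 else 0) - (if w = j then 1 else 0) :: real) = 0"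
    using i j simple_finite[OF simp1] by (simp add: sum_subtractf)
  then obtain \<phi> where phi: "\<forall>w\<in>V1. lapv V1 E1 \<phi> w = (if w = i then 1 else 0) - (if w = j then 1 else 0)"
    using lap_exists[OF simp1 conn1] by blast
  have R1: "resistance V1 E1 i j = \<phi> i - \<phi> j"
    by (rule resistance_eq[OF simp1 conn1 i j]) (use phi in auto)
  define F where "F k z = (if k = i then 1 else 0) * Mo (Some z) a - (if k = j then 1 else 0) * Mo (Some z) b" for k z
  define P where "P x = (case x of Inl k \<Rightarrow> \<phi> k | Inr (k, z) \<Rightarrow> \<phi> k + F k z)" for x
  have P_simps: "P (Inl k) = \<phi> k" "P (Inr (k, z)) = \<phi> k + F k z" for k z by (simp_all add: P_def)
  have node_Inl: "(Inl k = node i' c) \<longleftrightarrow> (k = i' \<and> c = None)" for k i' c by (cases c) auto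
  have node_Inr: "(Inr (k, z) = node i' c) \<longleftrightarrow> (k = i' \<and> c = Some z)" for k z i' c by (cases c) auto
  have lapP: "lapv VH EH P w = (if w = node i a then 1 else 0) - (if w = node j b then 1 else 0)"
    if w: "w \<in> VH" for w
  proof (cases w rule: vcases)
    case (L k)
    then have k: "k \<in> V1" using w by simp
    have "lapv VH EH P w = lapv V1 E1 \<phi> k - (\<Sum>e\<in>E2. F k (Inr e))"
      using lapv_Inl[OF k, of P] L lapv_nbr[OF simp1 k, of \<phi>] by (simp add: P_simps sum_negf)
    also have "(\<Sum>e\<in>E2. F k (Inr e)) = (if k = i then 1 else 0) * (if a = None then 0 else 1)
        - (if k = j then 1 else 0) * (if b = None then 0 else 1)"
      unfolding F_def using G_r[OF a] G_r[OF b] by (simp add: sum_subtractf sum_distrib_left[symmetric])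
    finally show ?thesis using phi k L node_Inl by auto
  next
    case (V k v)
    then have kv: "k \<in> V1" "v \<in> V2" using w by auto
    have "lapv VH EH P w = (\<Sum>e\<in>{e\<in>E2. v\<in>e}. F k (Inl v) - F k (Inr e))"
      using lapv_V[OF kv, of P] V by (simp add: P_simps)
    also have "\<dots> = (if k = i then 1 else 0) * (\<Sum>e\<in>{e\<in>E2. v\<in>e}. Mo (Some (Inl v)) a - Mo (Some (Inr e)) a)
        - (if k = j then 1 else 0) * (\<Sum>e\<in>{e\<in>E2. v\<in>e}. Mo (Some (Inl v)) b - Mo (Some (Inr e)) b)"
      unfolding F_def by (simp add: sum_subtractf sum_distrib_left algebra_simps)
    also have "\<dots> = (if k = i then 1 else 0) * (if a = Some (Inl v) then 1 else 0)
        - (if k = j then 1 else 0) * (if b = Some (Inl v) then 1 else 0)"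
      using G_v[OF kv(2) a] G_v[OF kv(2) b] by simp
    finally show ?thesis using V node_Inr by auto
  next
    case (E k e)
    then have ke: "k \<in> V1" "e \<in> E2" using w by auto
    have "lapv VH EH P w = (\<Sum>x\<in>e. F k (Inr e) - F k (Inl x)) + F k (Inr e)"
      using lapv_E[OF ke, of P] E by (simp add: P_simps)
    also have "\<dots> = (if k = i then 1 else 0) * ((\<Sum>x\<in>e. Mo (Some (Inr e)) a - Mo (Some (Inl x)) a) + Mo (Some (Inr e)) a)
        - (if k = j then 1 else 0) * ((\<Sum>x\<in>e. Mo (Some (Inr e)) b - Mo (Some (Inl x)) b) + Mo (Some (Inr e)) b)"
      unfolding F_def by (simp add: sum_subtractf sum_distrib_left algebra_simps)
    also have "\<dots> = (if k = i then 1 else 0) * (if a = Some (Inr e) then 1 else 0)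
        - (if k = j then 1 else 0) * (if b = Some (Inr e) then 1 else 0)"
      using G_e[OF ke(2) a] G_e[OF ke(2) b] by simp
    finally show ?thesis using E node_Inr by auto
  qed
  have nodeV: "node i a \<in> VH" "node j b \<in> VH" using i j a b unfolding VH_node by auto
  have "resistance VH EH (node i a) (node j b) = P (node i a) - P (node j b)"
    by (rule resistance_eq[OF simpleH connH nodeV]) (rule lapP)
  also have "P (node i a) = \<phi> i + Mo a a - (if i = j then 1 else 0) * Mo a b"
    by (cases a) (auto simp: P_simps F_def)
  also have "P (node j b) = \<phi> j + (if i = j then 1 else 0) * Mo b a - Mo b b"
    by (cases b) (auto simp: P_simps F_def)
  finally show ?thesis using R1 by (simp add: algebra_simps)
qed

lemma card_Os: "card Os = 1 + n2 + card E2"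
proof -
  have "card Zs = n2 + card E2"
    unfolding Zs_def using finE2
    by (subst card_Un_disjoint) (auto simp: card_image inj_on_def)
  moreover have "card (Some ` Zs) = card Zs" by (simp add: card_image inj_on_def)
  ultimately show ?thesis unfolding Os_def using finite_Zs by simp
qed

lemma kf_H:
  "kirchhoff VH EH = (real (card Os)^2 * (2 * kirchhoff V1 E1) + 2 * real (card V1)^2 * real (card Os) * (\<Sum>a\<in>Os. Mo a a)
      - 2 * real (card V1) * (\<Sum>a\<in>Os. \<Sum>b\<in>Os. Mo a b)) / 2"
proof -
  have f1: "finite V1" using simple_finite[OF simp1] .
  let ?g = "\<lambda>(i,a). node i a"
  have reidx: "(\<Sum>u\<in>VH. h u) = (\<Sum>i\<in>V1. \<Sum>a\<in>Os. h (node i a))" for h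
  proof -
    have "(\<Sum>u\<in>VH. h u) = (\<Sum>p\<in>V1 \<times> Os. h (?g p))"
      unfolding VH_node by (rule sum.reindex[OF node_inj, unfolded comp_def])
    also have "\<dots> = (\<Sum>i\<in>V1. \<Sum>a\<in>Os. h (node i a))"
      by (simp add: sum.cartesian_product split_def)
    finally show ?thesis .
  qed
  have "kirchhoff VH EH = (\<Sum>u\<in>VH. \<Sum>v\<in>VH. resistance VH EH u v) / 2"
    by (rule kf_sum[OF simpleH connH])
  also have "(\<Sum>u\<in>VH. \<Sum>v\<in>VH. resistance VH EH u v)
      = (\<Sum>i\<in>V1. \<Sum>a\<in>Os. \<Sum>j\<in>V1. \<Sum>b\<in>Os. resistance VH EH (node i a) (node j b))"
    by (simp add: reidx)
  also have "\<dots> = (\<Sum>i\<in>V1. \<Sum>a\<in>Os. \<Sum>j\<in>V1. \<Sum>b\<in>Os. resistance V1 E1 i j + Mo a a + Mo b b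
           - (if i = j then 1 else 0) * (Mo a b + Mo b a))"
    by (intro sum.cong refl) (simp add: res_H)
  also have "\<dots> = real (card Os)^2 * (\<Sum>i\<in>V1. \<Sum>j\<in>V1. resistance V1 E1 i j)
      + 2 * real (card V1)^2 * real (card Os) * (\<Sum>a\<in>Os. Mo a a) - 2 * real (card V1) * (\<Sum>a\<in>Os. \<Sum>b\<in>Os. Mo a b)"
    by (rule quad_sum[OF f1 finite_Os])
  also have "(\<Sum>i\<in>V1. \<Sum>j\<in>V1. resistance V1 E1 i j) = 2 * kirchhoff V1 E1"
    using kf_sum[OF simp1 conn1] by simp
  finally show ?thesis .
qed

end

theorem theorem4p3:
  fixes V1 :: "'a set" and E1 :: "'a set set"
    and n2 r2 :: nat and E2 :: "nat set set" and \<mu> :: "nat \<Rightarrow> real"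
  assumes G1: "simple_graph V1 E1" "connected_graph V1 E1"
    and G2: "simple_graph {0..<n2} E2" "regular_graph {0..<n2} E2 r2" "r2 \<ge> 1"
    and eig: "char_poly (lap_matrix n2 E2) = (\<Prod>i<n2. [:- \<mu> i, 1:])"
  shows
   "(let n1 = real (card V1); m2 = real (card E2); n2' = real n2; r = real r2;
         C = lap_matrix n2 E2 + r \<cdot>\<^sub>m 1\<^sub>m n2;
         S = (\<Sum>i<n2. 1 / (\<mu> i + r))
     in kirchhoff (corona_edge_V V1 {0..<n2} E2) (corona_edge_E V1 E1 {0..<n2} E2) =
        n1 * (1 + n2' + m2) *
          (n1 * m2 / 3
           + n1 / 3 * (mat_trace (the (mat_inverse C) * adj_matrix n2 E2) + r * S)
           + 3 * n1 * S
           + (m2 + n2' + 1) / n1 * kirchhoff V1 E1)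
        - (n1 * m2 * r + n1 * n2' * (r + 3)^2) / (3 * r))"
proof -
  interpret reg2 n2 r2 E2 using G2 by unfold_locales
  interpret corona n2 r2 E2 V1 E1 using G1 by unfold_locales
  define n1 where "n1 = real (card V1)"
  define m2 where "m2 = real (card E2)"
  define r where "r = real r2"
  define S where "S = (\<Sum>i<n2. 1 / (\<mu> i + r))"
  define t where "t = mat_trace (Ci * adj_matrix n2 E2)"
  define N where "N = real (card Os)"
  have n1pos: "n1 > 0" unfolding n1_def using conn1 simple_finite[OF simp1]
    unfolding connected_graph_def by (simp add: card_gt_0_iff)
  have rpos: "r > 0" unfolding r_def using r1 by simp
  have N: "N = 1 + real n2 + m2" unfolding N_def m2_def using card_Os by simp
  have m2e: "2 * m2 = real n2 * r" unfolding m2_def r_def by (rule m2_eq)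
  have trS: "mat_trace Ci = S" unfolding S_def r_def by (rule trace_Ci[OF eig])
  have T: "(\<Sum>a\<in>Os. Mo a a) = 3 * S + m2 / 3 + (r * S + t) / 3"
    using T_val unfolding trS m2_def r_def t_def .
  have SM: "(\<Sum>a\<in>Os. \<Sum>b\<in>Os. Mo a b) = (m2 * r + real n2 * (r + 3)^2) / (3 * r)"
  proof -
    have "(\<Sum>a\<in>Os. \<Sum>b\<in>Os. Mo a b) = 3 * real n2 / r + 2 * real n2 + m2 / 3 + r * real n2 / 3"
      using SM_val unfolding m2_def r_def .
    also have "\<dots> = (m2 * r + real n2 * (r + 3)^2) / (3 * r)"
      using rpos m2e by (simp add: field_simps power2_eq_square)
    finally show ?thesis .
  qed
  have KH: "kirchhoff VH EH = N^2 * kirchhoff V1 E1 + n1^2 * N * (3 * S + m2 / 3 + (r * S + t) / 3)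
      - n1 * ((m2 * r + real n2 * (r + 3)^2) / (3 * r))"
    using kf_H unfolding T SM N_def[symmetric] n1_def[symmetric] by simp
  have Ceq: "lap_matrix n2 E2 + r \<cdot>\<^sub>m 1\<^sub>m n2 = Cm" unfolding Cm_def r_def ..
  show ?thesis
    unfolding Let_def n1_def[symmetric] m2_def[symmetric] r_def[symmetric] S_def[symmetric]
      Ceq Ci_def[symmetric] t_def[symmetric] KH
    unfolding N[symmetric]
    using n1pos rpos N by (simp add: field_simps power2_eq_square)
qed

end
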